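(* Let $X$ be a smooth manifold, let $\mathcal{C}^\infty_X$ be the sheaf of germs of smooth $\mathbb{C}$-valued functions on $X$, let $(U,\phi)$ be a chart of $X$, and let $K\subseteq U$ be compact. Let $\mathcal{C}^\infty_X(K):=\varinjlim_{K\subseteq V}\mathcal{C}^\infty_X(V)$ (inductive limit over open $V\supseteq K$), endowed with the locally $m$-convex inductive limit topology. Then $\mathcal{C}^\infty_X(K)$ is a locally $m$-convex $Q$-algebra whose spectrum coincides with $K$.
   Context: Smooth manifolds are finite-dimensional and second countable. For each open $V$ with $K\subseteq V\subseteq U$, $\mathcal{C}^\infty_X(V)$ carries the Fréchet locally $m$-convex topology given by the seminorms $N_{m,C}(f)=\sup_{|p|\le m}\sup_{x\in C}|D^p(f\circ\phi^{-1})(\phi(x))|$, $C\subseteq V$ compact, $m\ge0$. The locally $m$-convex inductive limit topology on $\mathcal{C}^\infty_X(K)$ is the finest locally $m$-convex topology making all canonical maps $\mathcal{C}^\infty_X(V)\to\mathcal{C}^\infty_X(K)$ continuous. A topological algebra is a complex associative algebra that is a topological vector space with separately continuous multiplication; it is locally $m$-convex if its topology is given by a directed family of submultiplicative seminorms; a unital topological algebra is a $Q$-algebra if its group of invertible elements is open. The spectrum $\mathfrak{M}(\mathcal{A})$ of a commutative unital locally $m$-convex algebra is the set of continuous characters (nonzero multiplicative linear functionals) with the relative weak$^*$ topology; "coincides with $K$" means it is identified (homeomorphically) with $K$, points of $K$ corresponding to point evaluations. *)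

theory Defs
  imports "HOL-Analysis.Analysis"
begin

fun iter_pd :: "'n::euclidean_space list \<Rightarrow> ('n \<Rightarrow> 'b::real_normed_vector) \<Rightarrow> 'n \<Rightarrow> 'b" where
  "iter_pd [] g = g"
| "iter_pd (v # vs) g = (\<lambda>y. frechet_derivative (iter_pd vs g) (at y) v)"

definition smooth_on :: "'n::euclidean_space set \<Rightarrow> ('n \<Rightarrow> 'b::real_normed_vector) \<Rightarrow> bool" where
  "smooth_on S g \<longleftrightarrow> (\<forall>vs. set vs \<subseteq> Basis \<longrightarrow> iter_pd vs g differentiable_on S)"

definition is_chart :: "'a topology \<Rightarrow> 'a set \<Rightarrow> ('a \<Rightarrow> 'n::euclidean_space) \<Rightarrow> bool" where
  "is_chart X U \<phi> \<longleftrightarrow> openin X U \<and> open (\<phi> ` U) \<and>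
     homeomorphic_map (subtopology X U) (top_of_set (\<phi> ` U)) \<phi>"

definition smooth_atlas :: "'a topology \<Rightarrow> ('a set \<times> ('a \<Rightarrow> 'n::euclidean_space)) set \<Rightarrow> bool" where
  "smooth_atlas X Atl \<longleftrightarrow>
     (\<forall>(U,\<phi>)\<in>Atl. is_chart X U \<phi>) \<and>
     (\<Union>(U,\<phi>)\<in>Atl. U) = topspace X \<and>
     (\<forall>(U,\<phi>)\<in>Atl. \<forall>(W,\<psi>)\<in>Atl. smooth_on (\<phi> ` (U \<inter> W)) (\<psi> \<circ> inv_into U \<phi>))"

definition smooth_manifold :: "'a topology \<Rightarrow> ('a set \<times> ('a \<Rightarrow> 'n::euclidean_space)) set \<Rightarrow> bool" where
  "smooth_manifold X Atl \<longleftrightarrow> Hausdorff_space X \<and> second_countable X \<and> smooth_atlas X Atl"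

definition smooth_fun :: "'a topology \<Rightarrow> ('a set \<times> ('a \<Rightarrow> 'n::euclidean_space)) set \<Rightarrow> 'a set \<Rightarrow> ('a \<Rightarrow> complex) \<Rightarrow> bool" where
  "smooth_fun X Atl V f \<longleftrightarrow> openin X V \<and>
     (\<forall>(W,\<psi>)\<in>Atl. smooth_on (\<psi> ` (V \<inter> W)) (f \<circ> inv_into W \<psi>))"

definition Nsn :: "'a set \<Rightarrow> ('a \<Rightarrow> 'n::euclidean_space) \<Rightarrow> nat \<Rightarrow> 'a set \<Rightarrow> ('a \<Rightarrow> complex) \<Rightarrow> real" where
  "Nsn U \<phi> m C f = Sup (insert 0 {cmod (iter_pd vs (f \<circ> inv_into U \<phi>) (\<phi> x)) | vs x.
       set vs \<subseteq> Basis \<and> length vs \<le> m \<and> x \<in> C})"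

record 'g calg =
  ca_carrier :: "'g set"
  ca_add :: "'g \<Rightarrow> 'g \<Rightarrow> 'g"
  ca_mul :: "'g \<Rightarrow> 'g \<Rightarrow> 'g"
  ca_scale :: "complex \<Rightarrow> 'g \<Rightarrow> 'g"
  ca_one :: 'g

definition ca_zero :: "'g calg \<Rightarrow> 'g" where
  "ca_zero R = ca_scale R 0 (ca_one R)"

definition ca_sub :: "'g calg \<Rightarrow> 'g \<Rightarrow> 'g \<Rightarrow> 'g" where
  "ca_sub R a b = ca_add R a (ca_scale R (-1) b)"

definition comm_unital_calgebra :: "'g calg \<Rightarrow> bool" where
  "comm_unital_calgebra R \<longleftrightarrow> (let G = ca_carrier R; ad = ca_add R; mu = ca_mul R; sc = ca_scale R in
     ca_one R \<in> G \<and>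
     (\<forall>a\<in>G. \<forall>b\<in>G. ad a b \<in> G \<and> mu a b \<in> G) \<and> (\<forall>c. \<forall>a\<in>G. sc c a \<in> G) \<and>
     (\<forall>a\<in>G. \<forall>b\<in>G. \<forall>c\<in>G. ad (ad a b) c = ad a (ad b c) \<and> mu (mu a b) c = mu a (mu b c)
        \<and> mu a (ad b c) = ad (mu a b) (mu a c)) \<and>
     (\<forall>a\<in>G. \<forall>b\<in>G. ad a b = ad b a \<and> mu a b = mu b a) \<and>
     (\<forall>a\<in>G. ad a (ca_zero R) = a \<and> ad a (sc (-1) a) = ca_zero R \<and> mu (ca_one R) a = a) \<and>
     (\<forall>c d. \<forall>a\<in>G. sc c (sc d a) = sc (c * d) a \<and> sc (c + d) a = ad (sc c a) (sc d a)
        \<and> sc 1 a = a) \<and>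
     (\<forall>c. \<forall>a\<in>G. \<forall>b\<in>G. sc c (ad a b) = ad (sc c a) (sc c b) \<and> sc c (mu a b) = mu (sc c a) b))"

definition submult_seminorm :: "'g calg \<Rightarrow> ('g \<Rightarrow> real) \<Rightarrow> bool" where
  "submult_seminorm R p \<longleftrightarrow> (let G = ca_carrier R in
     (\<forall>a\<in>G. 0 \<le> p a) \<and>
     (\<forall>a\<in>G. \<forall>b\<in>G. p (ca_add R a b) \<le> p a + p b) \<and>
     (\<forall>c. \<forall>a\<in>G. p (ca_scale R c a) = cmod c * p a) \<and>
     (\<forall>a\<in>G. \<forall>b\<in>G. p (ca_mul R a b) \<le> p a * p b))"

definition seminorm_topology :: "'g calg \<Rightarrow> ('g \<Rightarrow> real) set \<Rightarrow> 'g topology" where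
  "seminorm_topology R P = topology_generated_by
     {{b \<in> ca_carrier R. p (ca_sub R b a) < e} | p a e. p \<in> P \<and> a \<in> ca_carrier R \<and> e > 0}"

definition topological_calgebra :: "'g calg \<Rightarrow> 'g topology \<Rightarrow> bool" where
  "topological_calgebra R T \<longleftrightarrow> comm_unital_calgebra R \<and> topspace T = ca_carrier R \<and>
     continuous_map (prod_topology T T) T (\<lambda>(a,b). ca_add R a b) \<and>
     continuous_map (prod_topology euclidean T) T (\<lambda>(c,a). ca_scale R c a) \<and>
     (\<forall>a\<in>ca_carrier R. continuous_map T T (ca_mul R a) \<and> continuous_map T T (\<lambda>b. ca_mul R b a))"

definition lmc_algebra :: "'g calg \<Rightarrow> 'g topology \<Rightarrow> bool" where
  "lmc_algebra R T \<longleftrightarrow> topological_calgebra R T \<and>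
     (\<exists>P. P \<noteq> {} \<and> (\<forall>p\<in>P. submult_seminorm R p) \<and>
        (\<forall>p\<in>P. \<forall>q\<in>P. \<exists>r\<in>P. \<forall>a\<in>ca_carrier R. p a \<le> r a \<and> q a \<le> r a) \<and>
        T = seminorm_topology R P)"

definition invertibles :: "'g calg \<Rightarrow> 'g set" where
  "invertibles R = {a \<in> ca_carrier R. \<exists>b\<in>ca_carrier R. ca_mul R a b = ca_one R \<and> ca_mul R b a = ca_one R}"

definition Q_algebra :: "'g calg \<Rightarrow> 'g topology \<Rightarrow> bool" where
  "Q_algebra R T \<longleftrightarrow> openin T (invertibles R)"

definition characters :: "'g calg \<Rightarrow> 'g topology \<Rightarrow> ('g \<Rightarrow> complex) set" where
  "characters R T = {ch. ch \<in> extensional (ca_carrier R) \<and> continuous_map T euclidean ch \<and>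
     (\<exists>a\<in>ca_carrier R. ch a \<noteq> 0) \<and>
     (\<forall>a\<in>ca_carrier R. \<forall>b\<in>ca_carrier R. ch (ca_add R a b) = ch a + ch b \<and>
        ch (ca_mul R a b) = ch a * ch b) \<and>
     (\<forall>c. \<forall>a\<in>ca_carrier R. ch (ca_scale R c a) = c * ch a)}"

text \<open>Spectrum with the relative weak-star (pointwise convergence) topology.\<close>
definition spectrum_top :: "'g calg \<Rightarrow> 'g topology \<Rightarrow> ('g \<Rightarrow> complex) topology" where
  "spectrum_top R T = subtopology (product_topology (\<lambda>_. euclidean) (ca_carrier R)) (characters R T)"

definition germ :: "'a topology \<Rightarrow> ('a set \<times> ('a \<Rightarrow> 'n::euclidean_space)) set \<Rightarrow> 'a set \<Rightarrow> 'a set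
    \<Rightarrow> ('a \<Rightarrow> complex) \<Rightarrow> ('a \<Rightarrow> complex) set" where
  "germ X Atl U K f = {g. \<exists>V. openin X V \<and> K \<subseteq> V \<and> V \<subseteq> U \<and> smooth_fun X Atl V g \<and>
       (\<forall>x\<in>V. g x = f x)}"

definition germ_rep :: "('a \<Rightarrow> complex) set \<Rightarrow> 'a \<Rightarrow> complex" where
  "germ_rep a = (SOME f. f \<in> a)"

text \<open>The algebra C-infinity_X(K) = inductive limit of C-infinity_X(V), K \<subseteq> V \<subseteq> U open.\<close>
definition germ_alg :: "'a topology \<Rightarrow> ('a set \<times> ('a \<Rightarrow> 'n::euclidean_space)) set \<Rightarrow> 'a set \<Rightarrow> 'a set
    \<Rightarrow> ('a \<Rightarrow> complex) set calg" where
  "germ_alg X Atl U K =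
    \<lparr> ca_carrier = {germ X Atl U K f | f. \<exists>V. openin X V \<and> K \<subseteq> V \<and> V \<subseteq> U \<and> smooth_fun X Atl V f},
      ca_add = (\<lambda>a b. germ X Atl U K (\<lambda>x. germ_rep a x + germ_rep b x)),
      ca_mul = (\<lambda>a b. germ X Atl U K (\<lambda>x. germ_rep a x * germ_rep b x)),
      ca_scale = (\<lambda>c a. germ X Atl U K (\<lambda>x. c * germ_rep a x)),
      ca_one = germ X Atl U K (\<lambda>x. 1) \<rparr>"

text \<open>The locally m-convex inductive limit topology: generated by all submultiplicative
  seminorms q on C-infinity_X(K) whose pullbacks q \<circ> \<pi>_V are continuous on the Frechet
  algebras C-infinity_X(V) (i.e. dominated by some c * N_{m,C}).\<close>
definition germ_top :: "'a topology \<Rightarrow> ('a set \<times> ('a \<Rightarrow> 'n::euclidean_space)) set \<Rightarrow> 'a set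
    \<Rightarrow> ('a \<Rightarrow> 'n) \<Rightarrow> 'a set \<Rightarrow> ('a \<Rightarrow> complex) set topology" where
  "germ_top X Atl U \<phi> K = seminorm_topology (germ_alg X Atl U K)
     {q. submult_seminorm (germ_alg X Atl U K) q \<and>
         (\<forall>V. openin X V \<and> K \<subseteq> V \<and> V \<subseteq> U \<longrightarrow>
            (\<exists>m C c. compactin X C \<and> C \<subseteq> V \<and>
               (\<forall>f. smooth_fun X Atl V f \<longrightarrow> q (germ X Atl U K f) \<le> c * Nsn U \<phi> m C f)))}"

definition point_eval :: "'a topology \<Rightarrow> ('a set \<times> ('a \<Rightarrow> 'n::euclidean_space)) set \<Rightarrow> 'a set \<Rightarrow> 'a set
    \<Rightarrow> 'a \<Rightarrow> ('a \<Rightarrow> complex) set \<Rightarrow> complex" where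
  "point_eval X Atl U K x = restrict (\<lambda>a. germ_rep a x) (ca_carrier (germ_alg X Atl U K))"

end

theory Submission
  imports Defs
begin

definition pd :: "'n::euclidean_space \<Rightarrow> ('n \<Rightarrow> 'b::real_normed_vector) \<Rightarrow> 'n \<Rightarrow> 'b" where
  "pd v g = (\<lambda>y. frechet_derivative g (at y) v)"

lemma iter_pd_snoc: "iter_pd (vs @ [v]) g = iter_pd vs (pd v g)"
  by (induction vs) (auto simp: pd_def)

definition smk :: "nat \<Rightarrow> 'n::euclidean_space set \<Rightarrow> ('n \<Rightarrow> 'b::real_normed_vector) \<Rightarrow> bool" where
  "smk k S g \<longleftrightarrow> (\<forall>vs. set vs \<subseteq> Basis \<and> length vs \<le> k \<longrightarrow> iter_pd vs g differentiable_on S)"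

lemma smooth_on_smk: "smooth_on S g \<longleftrightarrow> (\<forall>k. smk k S g)"
  unfolding smooth_on_def smk_def by auto

lemma smk_0: "smk 0 S g \<longleftrightarrow> g differentiable_on S"
  unfolding smk_def by auto

lemma smk_Suc: "smk (Suc k) S g \<longleftrightarrow> g differentiable_on S \<and> (\<forall>v\<in>Basis. smk k S (pd v g))"
proof
  assume a: "smk (Suc k) S g"
  have "g differentiable_on S" using a[unfolded smk_def, rule_format, of "[]"] by simp
  moreover have "smk k S (pd v g)" if "v \<in> Basis" for v
    unfolding smk_def
  proof (intro allI impI)
    fix ws :: "'a list" assume "set ws \<subseteq> Basis \<and> length ws \<le> k"
    then show "iter_pd ws (pd v g) differentiable_on S"
      using a[unfolded smk_def, rule_format, of "ws @ [v]"] that by (simp add: iter_pd_snoc)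
  qed
  ultimately show "g differentiable_on S \<and> (\<forall>v\<in>Basis. smk k S (pd v g))" by blast
next
  assume a: "g differentiable_on S \<and> (\<forall>v\<in>Basis. smk k S (pd v g))"
  show "smk (Suc k) S g" unfolding smk_def
  proof (intro allI impI)
    fix vs :: "'a list" assume vs: "set vs \<subseteq> Basis \<and> length vs \<le> Suc k"
    show "iter_pd vs g differentiable_on S"
    proof (cases vs rule: rev_cases)
      case Nil then show ?thesis using a by simp
    next
      case (snoc ws v)
      then show ?thesis using a vs unfolding smk_def by (simp add: iter_pd_snoc)
    qed
  qed
qed

lemma smk_mono: "k \<le> k' \<Longrightarrow> smk k' S g \<Longrightarrow> smk k S g"
  unfolding smk_def by auto

lemma frechet_derivative_cong_open:
  assumes "open S" "y \<in> S" "\<And>x. x \<in> S \<Longrightarrow> f x = g x"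
  shows "frechet_derivative f (at y) = frechet_derivative g (at y)"
proof -
  have "(f has_derivative D) (at y) \<longleftrightarrow> (g has_derivative D) (at y)" for D
    using has_derivative_transform_within_open[of f D y UNIV S g]
      has_derivative_transform_within_open[of g D y UNIV S f] assms by auto
  then show ?thesis unfolding frechet_derivative_def by simp
qed

lemma iter_pd_cong:
  assumes "open S" "\<forall>x\<in>S. f x = g x"
  shows "x \<in> S \<Longrightarrow> iter_pd vs f x = iter_pd vs g x"
proof (induction vs arbitrary: x)
  case Nil then show ?case using assms by simp
next
  case (Cons v vs)
  then show ?case using frechet_derivative_cong_open[OF assms(1) Cons.prems, of "iter_pd vs f" "iter_pd vs g"]
    by simp
qed

lemma differentiable_on_cong_open:
  assumes "open S" "\<And>x. x \<in> S \<Longrightarrow> f x = g x" "f differentiable_on S"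
  shows "g differentiable_on S"
  unfolding differentiable_on_eq_differentiable_at[OF assms(1)] differentiable_def
proof
  fix x assume x: "x \<in> S"
  then obtain D where "(f has_derivative D) (at x)"
    using assms(3) unfolding differentiable_on_eq_differentiable_at[OF assms(1)] differentiable_def by blast
  then have "(g has_derivative D) (at x within UNIV)"
    using has_derivative_transform_within_open[of f D x UNIV S g] x assms(1,2) by simp
  then show "\<exists>D. (g has_derivative D) (at x)" by auto
qed

lemma smk_cong:
  assumes "open S" "\<forall>x\<in>S. f x = g x" "smk k S f"
  shows "smk k S g"
  unfolding smk_def
proof (intro allI impI)
  fix vs :: "'a list" assume "set vs \<subseteq> Basis \<and> length vs \<le> k"
  then have "iter_pd vs f differentiable_on S" using assms(3) unfolding smk_def by blast
  then show "iter_pd vs g differentiable_on S"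
    using differentiable_on_cong_open[OF assms(1), of "iter_pd vs f" "iter_pd vs g"]
      iter_pd_cong[OF assms(1) assms(2)] by blast
qed

lemma smk_diff: "smk k S g \<Longrightarrow> g differentiable_on S"
  using smk_mono[of 0 k] smk_0 by blast

lemma pd_eq:
  assumes "open S" "g differentiable_on S" "y \<in> S"
  shows "(g has_derivative (frechet_derivative g (at y))) (at y)"
  using assms differentiable_on_eq_differentiable_at frechet_derivative_works by blast

lemma diffon_intro:
  assumes "open S" "\<And>y. y \<in> S \<Longrightarrow> (f has_derivative D y) (at y)"
  shows "f differentiable_on S"
  unfolding differentiable_on_eq_differentiable_at[OF assms(1)] differentiable_def
  using assms(2) by blast

lemma pd_at:
  assumes "(g has_derivative D) (at y)"
  shows "pd v g y = D v"
  using frechet_derivative_at[OF assms] unfolding pd_def by simp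

lemma smk_linear:
  assumes "open S" "bounded_linear L"
  shows "smk k S g \<Longrightarrow> smk k S (\<lambda>x. L (g x))"
proof (induction k arbitrary: g)
  case 0
  have dg: "g differentiable_on S" using 0 by (simp add: smk_0)
  show ?case unfolding smk_0
    by (rule diffon_intro[OF assms(1)], rule bounded_linear.has_derivative[OF assms(2) pd_eq[OF assms(1) dg]])
next
  case (Suc k)
  have dg: "g differentiable_on S" using Suc.prems by (simp add: smk_Suc)
  have D: "((\<lambda>x. L (g x)) has_derivative (\<lambda>h. L (frechet_derivative g (at y) h))) (at y)" if "y \<in> S" for y
    using bounded_linear.has_derivative[OF assms(2) pd_eq[OF assms(1) dg that]] .
  have "(\<lambda>x. L (g x)) differentiable_on S"
    by (rule diffon_intro[OF assms(1) D])
  moreover have "smk k S (pd v (\<lambda>x. L (g x)))" if "v \<in> Basis" for v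
  proof -
    have "smk k S (pd v g)" using Suc.prems that by (simp add: smk_Suc)
    then have "smk k S (\<lambda>x. L (pd v g x))" by (rule Suc.IH)
    moreover have B: "\<forall>x\<in>S. L (pd v g x) = pd v (\<lambda>x. L (g x)) x"
      using pd_at[OF D] by (simp add: pd_def)
    ultimately show ?thesis by (intro smk_cong[OF assms(1) B])
  qed
  ultimately show ?case by (simp add: smk_Suc)
qed

lemma smk_add:
  assumes "open S"
  shows "smk k S f \<Longrightarrow> smk k S g \<Longrightarrow> smk k S (\<lambda>x. f x + g x)"
proof (induction k arbitrary: f g)
  case 0
  have df: "f differentiable_on S" and dg: "g differentiable_on S" using 0 by (simp_all add: smk_0)
  show ?case unfolding smk_0
    by (rule diffon_intro[OF assms(1)], rule has_derivative_add[OF pd_eq[OF assms(1) df] pd_eq[OF assms(1) dg]])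
next
  case (Suc k)
  have df: "f differentiable_on S" and dg: "g differentiable_on S" using Suc.prems by (simp_all add: smk_Suc)
  have D: "((\<lambda>x. f x + g x) has_derivative (\<lambda>h. frechet_derivative f (at y) h + frechet_derivative g (at y) h)) (at y)" if "y \<in> S" for y
    using has_derivative_add[OF pd_eq[OF assms(1) df that] pd_eq[OF assms(1) dg that]] .
  have "(\<lambda>x. f x + g x) differentiable_on S"
    by (rule diffon_intro[OF assms(1) D])
  moreover have "smk k S (pd v (\<lambda>x. f x + g x))" if "v \<in> Basis" for v
  proof -
    have "smk k S (pd v f)" "smk k S (pd v g)" using Suc.prems that by (simp_all add: smk_Suc)
    then have "smk k S (\<lambda>x. pd v f x + pd v g x)" by (rule Suc.IH)
    moreover have B: "\<forall>x\<in>S. pd v f x + pd v g x = pd v (\<lambda>x. f x + g x) x"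
      using pd_at[OF D] by (simp add: pd_def)
    ultimately show ?thesis by (intro smk_cong[OF assms(1) B])
  qed
  ultimately show ?case by (simp add: smk_Suc)
qed

lemma smk_const: "open S \<Longrightarrow> smk k S (\<lambda>x. c)"
proof (induction k)
  case 0 then show ?case by (simp add: smk_0)
next
  case (Suc k)
  have B: "\<forall>x\<in>S. (0::'b) = pd v (\<lambda>x. c) x" for v
    by (metis pd_at has_derivative_const)
  have A: "smk k S (\<lambda>x. 0::'b)" using smk_linear[OF Suc.prems bounded_linear_zero Suc.IH[OF Suc.prems]] by simp
  have "smk k S (pd v (\<lambda>x. c))" for v using smk_cong[OF Suc.prems B A] by simp
  then show ?case by (simp add: smk_Suc)
qed

lemma smk_mult:
  fixes f g :: "'n::euclidean_space \<Rightarrow> 'c::real_normed_algebra"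
  assumes "open S"
  shows "smk k S f \<Longrightarrow> smk k S g \<Longrightarrow> smk k S (\<lambda>x. f x * g x)"
proof (induction k arbitrary: f g)
  case 0
  have df: "f differentiable_on S" and dg: "g differentiable_on S" using 0 by (simp_all add: smk_0)
  show ?case unfolding smk_0
    by (rule diffon_intro[OF assms(1)], rule has_derivative_mult[OF pd_eq[OF assms(1) df] pd_eq[OF assms(1) dg]])
next
  case (Suc k)
  have df: "f differentiable_on S" and dg: "g differentiable_on S" using Suc.prems by (simp_all add: smk_Suc)
  have D: "((\<lambda>x. f x * g x) has_derivative (\<lambda>h. f y * frechet_derivative g (at y) h + frechet_derivative f (at y) h * g y)) (at y)" if "y \<in> S" for y
    using has_derivative_mult[OF pd_eq[OF assms(1) df that] pd_eq[OF assms(1) dg that]] .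
  have "(\<lambda>x. f x * g x) differentiable_on S"
    by (rule diffon_intro[OF assms(1) D])
  moreover have "smk k S (pd v (\<lambda>x. f x * g x))" if "v \<in> Basis" for v
  proof -
    have fk: "smk k S f" "smk k S g" using Suc.prems smk_mono[of k "Suc k"] by auto
    have dk: "smk k S (pd v f)" "smk k S (pd v g)" using Suc.prems that by (simp_all add: smk_Suc)
    have "smk k S (\<lambda>x. f x * pd v g x + pd v f x * g x)"
      by (rule smk_add[OF assms(1) Suc.IH[OF fk(1) dk(2)] Suc.IH[OF dk(1) fk(2)]])
    moreover have B: "\<forall>x\<in>S. f x * pd v g x + pd v f x * g x = pd v (\<lambda>x. f x * g x) x"
      using pd_at[OF D] by (simp add: pd_def)
    ultimately show ?thesis by (intro smk_cong[OF assms(1) B])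
  qed
  ultimately show ?case by (simp add: smk_Suc)
qed

lemma smk_inverse:
  fixes f :: "'n::euclidean_space \<Rightarrow> 'c::real_normed_field"
  assumes "open S" "\<forall>x\<in>S. f x \<noteq> 0"
  shows "smk k S f \<Longrightarrow> smk k S (\<lambda>x. inverse (f x))"
proof (induction k)
  case 0
  have df: "f differentiable_on S" using 0 by (simp_all add: smk_0)
  show ?case unfolding smk_0
    by (rule diffon_intro[OF assms(1)], rule Deriv.has_derivative_inverse[OF _ pd_eq[OF assms(1) df]], use assms(2) in auto)
next
  case (Suc k)
  have df: "f differentiable_on S" using Suc.prems by (simp_all add: smk_Suc)
  have D: "((\<lambda>x. inverse (f x)) has_derivative (\<lambda>h. - (inverse (f y) * frechet_derivative f (at y) h * inverse (f y)))) (at y)" if "y \<in> S" for y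
    using Deriv.has_derivative_inverse[OF _ pd_eq[OF assms(1) df that]] assms(2) that by auto
  have "(\<lambda>x. inverse (f x)) differentiable_on S"
    by (rule diffon_intro[OF assms(1) D])
  moreover have "smk k S (pd v (\<lambda>x. inverse (f x)))" if "v \<in> Basis" for v
  proof -
    have fk: "smk k S f" using Suc.prems smk_mono[of k "Suc k"] by auto
    have ik: "smk k S (\<lambda>x. inverse (f x))" by (rule Suc.IH[OF fk])
    have dk: "smk k S (pd v f)" using Suc.prems that by (simp_all add: smk_Suc)
    have "smk k S (\<lambda>x. - (inverse (f x) * pd v f x * inverse (f x)))"
      using smk_linear[OF assms(1) bounded_linear_minus[OF bounded_linear_ident]
          smk_mult[OF assms(1) smk_mult[OF assms(1) ik dk] ik]] by simp
    moreover have B: "\<forall>x\<in>S. - (inverse (f x) * pd v f x * inverse (f x)) = pd v (\<lambda>x. inverse (f x)) x"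
      using pd_at[OF D] by (simp add: pd_def)
    ultimately show ?thesis by (intro smk_cong[OF assms(1) B])
  qed
  ultimately show ?case by (simp add: smk_Suc)
qed

lemma smooth_linear: "open S \<Longrightarrow> bounded_linear L \<Longrightarrow> smooth_on S g \<Longrightarrow> smooth_on S (\<lambda>x. L (g x))"
  by (simp add: smooth_on_smk smk_linear)
lemma smooth_add: "open S \<Longrightarrow> smooth_on S f \<Longrightarrow> smooth_on S g \<Longrightarrow> smooth_on S (\<lambda>x. f x + g x)"
  by (simp add: smooth_on_smk smk_add)
lemma smooth_mult: "open S \<Longrightarrow> smooth_on S f \<Longrightarrow> smooth_on S g \<Longrightarrow> smooth_on S (\<lambda>x. f x * g x :: 'c::real_normed_algebra)"
  by (simp add: smooth_on_smk smk_mult)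
lemma smooth_const: "open S \<Longrightarrow> smooth_on S (\<lambda>x. c)"
  by (simp add: smooth_on_smk smk_const)
lemma smooth_inverse: "open S \<Longrightarrow> \<forall>x\<in>S. f x \<noteq> 0 \<Longrightarrow> smooth_on S f \<Longrightarrow> smooth_on S (\<lambda>x. inverse (f x) :: 'c::real_normed_field)"
  by (simp add: smooth_on_smk smk_inverse)
lemma smooth_subset: "smooth_on S f \<Longrightarrow> T \<subseteq> S \<Longrightarrow> smooth_on T f"
  unfolding smooth_on_def using differentiable_on_subset by blast
lemma smooth_cong: "open S \<Longrightarrow> \<forall>x\<in>S. f x = g x \<Longrightarrow> smooth_on S f \<Longrightarrow> smooth_on S g"
  unfolding smooth_on_smk using smk_cong by blast
lemma smooth_continuous: "smooth_on S f \<Longrightarrow> continuous_on S f"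
  unfolding smooth_on_def by (drule spec[of _ "[]"]) (simp add: differentiable_imp_continuous_on)


lemma atlas_chart: "smooth_manifold X Atl \<Longrightarrow> (W,\<psi>) \<in> Atl \<Longrightarrow> is_chart X W \<psi>"
  unfolding smooth_manifold_def smooth_atlas_def by fast

lemma chart_open: "is_chart X W \<psi> \<Longrightarrow> openin X W"
  unfolding is_chart_def by blast

lemma chart_inj: "is_chart X W \<psi> \<Longrightarrow> inj_on \<psi> W"
proof -
  assume c: "is_chart X W \<psi>"
  then have "W \<subseteq> topspace X" using chart_open openin_subset by blast
  then show ?thesis using c unfolding is_chart_def
    using homeomorphic_imp_injective_map[of "subtopology X W" "top_of_set (\<psi> ` W)" \<psi>]
    by (simp add: topspace_subtopology_subset Int_absorb1 Int_absorb2)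
qed

lemma chart_inv: "is_chart X W \<psi> \<Longrightarrow> x \<in> W \<Longrightarrow> inv_into W \<psi> (\<psi> x) = x"
  using chart_inj inv_into_f_f by metis

lemma chart_image_open:
  assumes c: "is_chart X W \<psi>" and V: "openin X V"
  shows "open (\<psi> ` (V \<inter> W))"
proof -
  have Wt: "W \<subseteq> topspace X" using c chart_open openin_subset by blast
  have h: "homeomorphic_map (subtopology X W) (top_of_set (\<psi> ` W)) \<psi>" using c unfolding is_chart_def by blast
  have "openin (subtopology X W) (V \<inter> W)" using V by (rule openin_subtopology_Int)
  moreover have "V \<inter> W \<subseteq> topspace (subtopology X W)" using Wt by (auto simp: topspace_subtopology_subset)
  ultimately have "openin (top_of_set (\<psi> ` W)) (\<psi> ` (V \<inter> W))"
    using homeomorphic_map_openness[OF h] by blast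
  moreover have "open (\<psi> ` W)" using c unfolding is_chart_def by blast
  ultimately show ?thesis using openin_open_trans by blast
qed

lemma chart_cont:
  assumes c: "is_chart X W \<psi>"
  shows "continuous_map (subtopology X W) euclidean \<psi>"
proof -
  have h: "homeomorphic_map (subtopology X W) (top_of_set (\<psi> ` W)) \<psi>" using c unfolding is_chart_def by blast
  then have "continuous_map (subtopology X W) (top_of_set (\<psi> ` W)) \<psi>" using homeomorphic_imp_continuous_map by blast
  then show ?thesis using continuous_map_in_subtopology by blast
qed

lemma smooth_fun_subset:
  assumes "smooth_fun X Atl V f" "openin X V'" "V' \<subseteq> V"
  shows "smooth_fun X Atl V' f"
  unfolding smooth_fun_def
proof (intro conjI ballI)
  show "openin X V'" by fact
  fix p assume p: "p \<in> Atl"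
  obtain W \<psi> where pw: "p = (W, \<psi>)" by force
  have "smooth_on (\<psi> ` (V \<inter> W)) (f \<circ> inv_into W \<psi>)" using assms(1) p pw unfolding smooth_fun_def by auto
  moreover have "\<psi> ` (V' \<inter> W) \<subseteq> \<psi> ` (V \<inter> W)" using assms(3) by auto
  ultimately show "case p of (W, \<psi>) \<Rightarrow> smooth_on (\<psi> ` (V' \<inter> W)) (f \<circ> inv_into W \<psi>)"
    using pw smooth_subset by auto
qed

lemma smooth_fun_op2:
  fixes Atl :: "('a set \<times> ('a \<Rightarrow> 'n::euclidean_space)) set"
  assumes man: "smooth_manifold X Atl"
    and f: "smooth_fun X Atl V f" and g: "smooth_fun X Atl V g"
    and op: "\<And>(S::'n::euclidean_space set) a b. open S \<Longrightarrow> smooth_on S a \<Longrightarrow> smooth_on S b \<Longrightarrow> smooth_on S (\<lambda>x. F (a x) (b x))"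
  shows "smooth_fun X Atl V (\<lambda>x. F (f x) (g x))"
  unfolding smooth_fun_def
proof (intro conjI ballI)
  show "openin X V" using f smooth_fun_def by blast
  fix p assume p: "p \<in> Atl"
  obtain W \<psi> where pw: "p = (W, \<psi>)" by force
  have o: "open (\<psi> ` (V \<inter> W))" using chart_image_open atlas_chart[OF man] p pw f smooth_fun_def by metis
  have "smooth_on (\<psi> ` (V \<inter> W)) (f \<circ> inv_into W \<psi>)" "smooth_on (\<psi> ` (V \<inter> W)) (g \<circ> inv_into W \<psi>)"
    using f g p pw unfolding smooth_fun_def by auto
  from op[OF o this] show "case p of (W, \<psi>) \<Rightarrow> smooth_on (\<psi> ` (V \<inter> W)) ((\<lambda>x. F (f x) (g x)) \<circ> inv_into W \<psi>)"
    using pw by (simp add: o_def)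
qed

lemma smooth_fun_op1:
  fixes Atl :: "('a set \<times> ('a \<Rightarrow> 'n::euclidean_space)) set"
  assumes man: "smooth_manifold X Atl"
    and f: "smooth_fun X Atl V f"
    and op: "\<And>(S::'n::euclidean_space set) a. open S \<Longrightarrow> smooth_on S a \<Longrightarrow> smooth_on S (\<lambda>x. F (a x))"
  shows "smooth_fun X Atl V (\<lambda>x. F (f x))"
  using smooth_fun_op2[OF man f f, of "\<lambda>u v. F u"] op by blast

lemma smooth_fun_add: "smooth_manifold X Atl \<Longrightarrow> smooth_fun X Atl V f \<Longrightarrow> smooth_fun X Atl V g \<Longrightarrow> smooth_fun X Atl V (\<lambda>x. f x + g x)"
  using smooth_fun_op2[of X Atl V f g "(+)"] smooth_add by blast
lemma smooth_fun_mult: "smooth_manifold X Atl \<Longrightarrow> smooth_fun X Atl V f \<Longrightarrow> smooth_fun X Atl V g \<Longrightarrow> smooth_fun X Atl V (\<lambda>x. f x * g x)"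
  using smooth_fun_op2[of X Atl V f g "(*)"] smooth_mult by blast
lemma smooth_fun_cmult: "smooth_manifold X Atl \<Longrightarrow> smooth_fun X Atl V f \<Longrightarrow> smooth_fun X Atl V (\<lambda>x. c * f x)"
  using smooth_fun_op1[of X Atl V f "(*) c"] smooth_mult smooth_const by blast
lemma smooth_fun_cnj: "smooth_manifold X Atl \<Longrightarrow> smooth_fun X Atl V f \<Longrightarrow> smooth_fun X Atl V (\<lambda>x. cnj (f x))"
  using smooth_fun_op1[of X Atl V f cnj] smooth_linear bounded_linear_cnj by blast
lemma smooth_fun_const:
  assumes man: "smooth_manifold X Atl" and V: "openin X V"
  shows "smooth_fun X Atl V (\<lambda>x. c)"
  unfolding smooth_fun_def
proof (intro conjI ballI)
  show "openin X V" by fact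
  fix p assume p: "p \<in> Atl"
  obtain W \<psi> where pw: "p = (W, \<psi>)" by force
  have o: "open (\<psi> ` (V \<inter> W))" using chart_image_open atlas_chart[OF man] p pw V by metis
  show "case p of (W, \<psi>) \<Rightarrow> smooth_on (\<psi> ` (V \<inter> W)) ((\<lambda>x. c) \<circ> inv_into W \<psi>)"
    using pw smooth_const[OF o, of c] by (simp add: o_def)
qed

lemma smooth_fun_inverse:
  assumes man: "smooth_manifold X Atl" and f: "smooth_fun X Atl V f" and nz: "\<forall>x\<in>V. f x \<noteq> 0"
  shows "smooth_fun X Atl V (\<lambda>x. inverse (f x))"
  unfolding smooth_fun_def
proof (intro conjI ballI)
  show "openin X V" using f smooth_fun_def by blast
  fix p assume p: "p \<in> Atl"
  obtain W \<psi> where pw: "p = (W, \<psi>)" by force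
  have c: "is_chart X W \<psi>" using atlas_chart[OF man] p pw by blast
  have o: "open (\<psi> ` (V \<inter> W))" using chart_image_open c f smooth_fun_def by metis
  have s: "smooth_on (\<psi> ` (V \<inter> W)) (f \<circ> inv_into W \<psi>)"
    using f p pw unfolding smooth_fun_def by auto
  have "\<forall>y\<in>\<psi> ` (V \<inter> W). (f \<circ> inv_into W \<psi>) y \<noteq> 0"
    using chart_inv[OF c] nz by auto
  from smooth_inverse[OF o this s] show "case p of (W, \<psi>) \<Rightarrow> smooth_on (\<psi> ` (V \<inter> W)) ((\<lambda>x. inverse (f x)) \<circ> inv_into W \<psi>)"
    using pw by (simp add: o_def)
qed

lemma smooth_fun_coord:
  assumes man: "smooth_manifold X Atl" and p: "(U,\<phi>) \<in> Atl"
  shows "smooth_fun X Atl U (\<lambda>z. complex_of_real (\<phi> z \<bullet> b))"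
  unfolding smooth_fun_def
proof (intro conjI ballI)
  show "openin X U" using chart_open atlas_chart[OF man p] .
  fix q assume q: "q \<in> Atl"
  obtain W \<psi> where qw: "q = (W, \<psi>)" by force
  have c: "is_chart X W \<psi>" using atlas_chart[OF man] q qw by blast
  have o: "open (\<psi> ` (U \<inter> W))" using chart_image_open c chart_open atlas_chart[OF man p] by metis
  have "smooth_on (\<psi> ` (W \<inter> U)) (\<phi> \<circ> inv_into W \<psi>)"
    using man p q qw unfolding smooth_manifold_def smooth_atlas_def by fast
  then have s: "smooth_on (\<psi> ` (U \<inter> W)) (\<phi> \<circ> inv_into W \<psi>)" by (simp add: Int_commute)
  have bl: "bounded_linear (\<lambda>v. complex_of_real (v \<bullet> b))"
    using bounded_linear_compose[OF bounded_linear_of_real bounded_linear_inner_left[of b]] by (simp add: o_def)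
  from smooth_linear[OF o bl s] show "case q of (W, \<psi>) \<Rightarrow> smooth_on (\<psi> ` (U \<inter> W)) ((\<lambda>z. complex_of_real (\<phi> z \<bullet> b)) \<circ> inv_into W \<psi>)"
    using qw by (simp add: o_def)
qed

lemma smooth_fun_continuous:
  assumes man: "smooth_manifold X Atl" and p: "(U,\<phi>) \<in> Atl"
    and f: "smooth_fun X Atl V f" and VU: "V \<subseteq> U"
  shows "continuous_map (subtopology X V) euclidean f"
proof -
  have c: "is_chart X U \<phi>" using atlas_chart[OF man p] .
  have VX: "V \<subseteq> topspace X" using f openin_subset unfolding smooth_fun_def by blast
  have "continuous_on (\<phi> ` (V \<inter> U)) (f \<circ> inv_into U \<phi>)"
    using f p unfolding smooth_fun_def using smooth_continuous by fast
  then have g: "continuous_map (top_of_set (\<phi> ` V)) euclidean (f \<circ> inv_into U \<phi>)"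
    using VU by (simp add: Int_absorb2)
  have "continuous_map (subtopology X V) euclidean \<phi>"
    using continuous_map_from_subtopology[OF chart_cont[OF c], of V] VU
    by (simp add: subtopology_subtopology Int_absorb1)
  then have "continuous_map (subtopology X V) (top_of_set (\<phi> ` V)) \<phi>"
    by (rule continuous_map_into_subtopology) (auto simp: topspace_subtopology)
  from continuous_map_compose[OF this g] show ?thesis
    by (rule continuous_map_eq) (use VX VU chart_inv[OF c] in \<open>auto simp: topspace_subtopology\<close>)
qed


locale gctx =
  fixes X :: "'a topology" and Atl :: "('a set \<times> ('a \<Rightarrow> 'n::euclidean_space)) set"
    and U K :: "'a set" and \<phi> :: "'a \<Rightarrow> 'n"
  assumes man: "smooth_manifold X Atl" and chart: "(U,\<phi>) \<in> Atl"
    and Kc: "compactin X K" and KU: "K \<subseteq> U"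
begin

abbreviation "G \<equiv> germ_alg X Atl U K"
abbreviation "gm \<equiv> germ X Atl U K"
abbreviation "CR \<equiv> ca_carrier G"
abbreviation "rep \<equiv> germ_rep"

definition smK where "smK f \<longleftrightarrow> (\<exists>V. openin X V \<and> K \<subseteq> V \<and> V \<subseteq> U \<and> smooth_fun X Atl V f)"
definition FK :: "'a filter" where "FK = (INF V\<in>{V. openin X V \<and> K \<subseteq> V}. principal V)"

lemma KX: "K \<subseteq> topspace X" using Kc compactin_subset_topspace by blast
lemma Uopen: "openin X U" using chart_open atlas_chart[OF man chart] .
lemma ischart: "is_chart X U \<phi>" using atlas_chart[OF man chart] .

lemma eventually_FK: "eventually P FK \<longleftrightarrow> (\<exists>V. openin X V \<and> K \<subseteq> V \<and> (\<forall>x\<in>V. P x))"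
proof -
  have "eventually P FK \<longleftrightarrow> (\<exists>V\<in>{V. openin X V \<and> K \<subseteq> V}. eventually P (principal V))"
    unfolding FK_def
  proof (rule eventually_INF_base)
    show "{V. openin X V \<and> K \<subseteq> V} \<noteq> {}" using KX by auto
    fix a b assume "a \<in> {V. openin X V \<and> K \<subseteq> V}" "b \<in> {V. openin X V \<and> K \<subseteq> V}"
    then show "\<exists>x\<in>{V. openin X V \<and> K \<subseteq> V}. principal x \<le> inf (principal a) (principal b)"
      by (intro bexI[of _ "a \<inter> b"]) auto
  qed
  then show ?thesis by (auto simp: eventually_principal)
qed

lemma ev_K: "eventually P FK \<Longrightarrow> x \<in> K \<Longrightarrow> P x"
  unfolding eventually_FK by blast

lemma gm_ev:
  assumes "eventually (\<lambda>x. f x = g x) FK"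
  shows "gm f = gm g"
proof -
  obtain V where V: "openin X V" "K \<subseteq> V" "\<forall>x\<in>V. f x = g x" using assms unfolding eventually_FK by blast
  have *: "h \<in> gm f2" if hf: "h \<in> gm f1" and hv: "\<forall>x\<in>V. f1 x = f2 x" for h f1 f2
  proof -
    obtain V' where V': "openin X V'" "K \<subseteq> V'" "V' \<subseteq> U" "smooth_fun X Atl V' h" "\<forall>x\<in>V'. h x = f1 x"
    proof -
      have "\<exists>V'. openin X V' \<and> K \<subseteq> V' \<and> V' \<subseteq> U \<and> smooth_fun X Atl V' h \<and> (\<forall>x\<in>V'. h x = f1 x)"
        using hf by (simp add: germ_def)
      then show ?thesis using that by blast
    qed
    have "openin X (V' \<inter> V)" using V'(1) V(1) by blast
    moreover have "K \<subseteq> V' \<inter> V" "V' \<inter> V \<subseteq> U" using V'(2,3) V(2) by auto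
    moreover have "smooth_fun X Atl (V' \<inter> V) h" using smooth_fun_subset[OF V'(4) \<open>openin X (V' \<inter> V)\<close>] by blast
    moreover have "\<forall>x\<in>V' \<inter> V. h x = f2 x" using V'(5) hv by auto
    ultimately show ?thesis unfolding germ_def by blast
  qed
  have V3: "\<forall>x\<in>V. g x = f x" using V(3) by auto
  show ?thesis
  proof (rule set_eqI)
    fix h show "h \<in> gm f \<longleftrightarrow> h \<in> gm g" using *[of h f g] *[of h g f] V(3) V3 by blast
  qed
qed

lemma smK_in: "smK f \<Longrightarrow> f \<in> gm f"
  unfolding smK_def germ_def by blast

lemma carrier_iff: "a \<in> CR \<longleftrightarrow> (\<exists>f. smK f \<and> a = gm f)"
  unfolding germ_alg_def smK_def by auto

lemma rep_in: "smK f \<Longrightarrow> rep (gm f) \<in> gm f"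
  unfolding germ_rep_def using smK_in by (metis someI_ex)

lemma rep_ev: "smK f \<Longrightarrow> eventually (\<lambda>x. rep (gm f) x = f x) FK"
  using rep_in[of f] unfolding germ_def eventually_FK by blast

lemma rep_smK: "a \<in> CR \<Longrightarrow> smK (rep a)"
proof -
  assume "a \<in> CR"
  then obtain f where f: "smK f" "a = gm f" using carrier_iff by blast
  then show ?thesis using rep_in[OF f(1)] unfolding germ_def smK_def by blast
qed

lemma gm_rep: "a \<in> CR \<Longrightarrow> gm (rep a) = a"
proof -
  assume "a \<in> CR"
  then obtain f where f: "smK f" "a = gm f" using carrier_iff by blast
  show ?thesis using gm_ev[OF rep_ev[OF f(1)]] f(2) by simp
qed

lemma gm_in: "smK f \<Longrightarrow> gm f \<in> CR"
  using carrier_iff by blast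

lemma smK_op2:
  assumes f: "smK f" and g: "smK g"
    and op: "\<And>V. smooth_fun X Atl V f \<Longrightarrow> smooth_fun X Atl V g \<Longrightarrow> smooth_fun X Atl V (\<lambda>x. F (f x) (g x))"
  shows "smK (\<lambda>x. F (f x) (g x))"
proof -
  obtain V1 where V1: "openin X V1" "K \<subseteq> V1" "V1 \<subseteq> U" "smooth_fun X Atl V1 f" using f smK_def by blast
  obtain V2 where V2: "openin X V2" "K \<subseteq> V2" "V2 \<subseteq> U" "smooth_fun X Atl V2 g" using g smK_def by blast
  have "smooth_fun X Atl (V1 \<inter> V2) f" "smooth_fun X Atl (V1 \<inter> V2) g"
    using smooth_fun_subset V1 V2 by (meson inf_le1 inf_le2 openin_Int)+
  then show ?thesis unfolding smK_def using V1 V2 op by (intro exI[of _ "V1 \<inter> V2"]) auto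
qed

lemma smK_add: "smK f \<Longrightarrow> smK g \<Longrightarrow> smK (\<lambda>x. f x + g x)"
  using smK_op2[of f g "(+)"] smooth_fun_add[OF man] by blast
lemma smK_mult: "smK f \<Longrightarrow> smK g \<Longrightarrow> smK (\<lambda>x. f x * g x)"
  using smK_op2[of f g "(*)"] smooth_fun_mult[OF man] by blast
lemma smK_cmult: "smK f \<Longrightarrow> smK (\<lambda>x. c * f x)"
  using smK_op2[of f f "\<lambda>u v. c * u"] smooth_fun_cmult[OF man] by blast
lemma smK_cnj: "smK f \<Longrightarrow> smK (\<lambda>x. cnj (f x))"
  using smK_op2[of f f "\<lambda>u v. cnj u"] smooth_fun_cnj[OF man] by blast
lemma smK_const: "smK (\<lambda>x. c)"
  unfolding smK_def using Uopen KU smooth_fun_const[OF man Uopen] by blast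

lemma G_simps:
  "ca_add G a b = gm (\<lambda>x. rep a x + rep b x)"
  "ca_mul G a b = gm (\<lambda>x. rep a x * rep b x)"
  "ca_scale G c a = gm (\<lambda>x. c * rep a x)"
  "ca_one G = gm (\<lambda>x. 1)"
  by (simp_all add: germ_alg_def)

lemma add_in: "a \<in> CR \<Longrightarrow> b \<in> CR \<Longrightarrow> ca_add G a b \<in> CR"
  by (simp only: G_simps) (intro gm_in smK_add rep_smK)
lemma mul_in: "a \<in> CR \<Longrightarrow> b \<in> CR \<Longrightarrow> ca_mul G a b \<in> CR"
  by (simp only: G_simps) (intro gm_in smK_mult rep_smK)
lemma scale_in: "a \<in> CR \<Longrightarrow> ca_scale G c a \<in> CR"
  by (simp only: G_simps) (intro gm_in smK_cmult rep_smK)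
lemma one_in: "ca_one G \<in> CR"
  by (simp only: G_simps) (intro gm_in smK_const)
lemma zero_in: "ca_zero G \<in> CR"
  unfolding ca_zero_def by (intro scale_in one_in)
lemma sub_in: "a \<in> CR \<Longrightarrow> b \<in> CR \<Longrightarrow> ca_sub G a b \<in> CR"
  unfolding ca_sub_def by (intro add_in scale_in)

lemma ev_add: "a \<in> CR \<Longrightarrow> b \<in> CR \<Longrightarrow> eventually (\<lambda>x. rep (ca_add G a b) x = rep a x + rep b x) FK"
  by (simp only: G_simps) (intro rep_ev smK_add rep_smK)
lemma ev_mul: "a \<in> CR \<Longrightarrow> b \<in> CR \<Longrightarrow> eventually (\<lambda>x. rep (ca_mul G a b) x = rep a x * rep b x) FK"
  by (simp only: G_simps) (intro rep_ev smK_mult rep_smK)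
lemma ev_scale: "a \<in> CR \<Longrightarrow> eventually (\<lambda>x. rep (ca_scale G c a) x = c * rep a x) FK"
  by (simp only: G_simps) (intro rep_ev smK_cmult rep_smK)
lemma ev_one: "eventually (\<lambda>x. rep (ca_one G) x = 1) FK"
  by (simp only: G_simps) (intro rep_ev smK_const)
lemma ev_zero: "eventually (\<lambda>x. rep (ca_zero G) x = 0) FK"
  unfolding ca_zero_def using ev_scale[OF one_in, of 0] by simp
lemma ev_sub: "a \<in> CR \<Longrightarrow> b \<in> CR \<Longrightarrow> eventually (\<lambda>x. rep (ca_sub G a b) x = rep a x - rep b x) FK"
proof -
  assume a: "a \<in> CR" and b: "b \<in> CR"
  show ?thesis unfolding ca_sub_def using ev_add[OF a scale_in[OF b, of "-1"]] ev_scale[OF b, of "-1"]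
    by eventually_elim simp
qed

lemma eq_ev: "a \<in> CR \<Longrightarrow> b \<in> CR \<Longrightarrow> eventually (\<lambda>x. rep a x = rep b x) FK \<Longrightarrow> a = b"
proof -
  assume a: "a \<in> CR" and b: "b \<in> CR" and e: "eventually (\<lambda>x. rep a x = rep b x) FK"
  have "gm (rep a) = gm (rep b)" by (rule gm_ev[OF e])
  then show ?thesis using gm_rep[OF a] gm_rep[OF b] by simp
qed

lemma eq5:
  assumes "a \<in> CR" "b \<in> CR" "eventually P1 FK" "eventually P2 FK" "eventually P3 FK"
    "eventually P4 FK" "eventually P5 FK"
    "\<And>x. P1 x \<Longrightarrow> P2 x \<Longrightarrow> P3 x \<Longrightarrow> P4 x \<Longrightarrow> P5 x \<Longrightarrow> rep a x = rep b x"
  shows "a = b"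
proof (rule eq_ev[OF assms(1,2)])
  show "eventually (\<lambda>x. rep a x = rep b x) FK"
    using assms(3-7) by eventually_elim (rule assms(8))
qed

lemmas T0 = eventually_True

lemma zero_eq: "ca_zero G = gm (\<lambda>x. 0)"
proof -
  have "gm (rep (ca_zero G)) = gm (\<lambda>x. 0)" by (rule gm_ev[OF ev_zero])
  then show ?thesis using gm_rep[OF zero_in] by simp
qed

lemma comm_alg: "comm_unital_calgebra G"
  unfolding comm_unital_calgebra_def Let_def
proof (intro conjI ballI allI)
  show "ca_one G \<in> CR" by (rule one_in)
  fix a b c assume a: "a \<in> CR" and b: "b \<in> CR" and c: "c \<in> CR"
  show "ca_add G a b \<in> CR" "ca_mul G a b \<in> CR" using a b add_in mul_in by auto
  show "ca_add G (ca_add G a b) c = ca_add G a (ca_add G b c)"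
    by (rule eq5[OF add_in[OF add_in[OF a b] c] add_in[OF a add_in[OF b c]]
      ev_add[OF a b] ev_add[OF add_in[OF a b] c] ev_add[OF b c] ev_add[OF a add_in[OF b c]] T0]) (simp add: algebra_simps)
  show "ca_mul G (ca_mul G a b) c = ca_mul G a (ca_mul G b c)"
    by (rule eq5[OF mul_in[OF mul_in[OF a b] c] mul_in[OF a mul_in[OF b c]]
      ev_mul[OF a b] ev_mul[OF mul_in[OF a b] c] ev_mul[OF b c] ev_mul[OF a mul_in[OF b c]] T0]) (simp add: algebra_simps)
  show "ca_mul G a (ca_add G b c) = ca_add G (ca_mul G a b) (ca_mul G a c)"
    by (rule eq5[OF mul_in[OF a add_in[OF b c]] add_in[OF mul_in[OF a b] mul_in[OF a c]]
      ev_add[OF b c] ev_mul[OF a add_in[OF b c]] ev_add[OF mul_in[OF a b] mul_in[OF a c]] ev_mul[OF a b] ev_mul[OF a c]]) (simp add: algebra_simps)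
next
  fix a b assume a: "a \<in> CR" and b: "b \<in> CR"
  show "ca_add G a b = ca_add G b a"
    by (rule eq5[OF add_in[OF a b] add_in[OF b a] ev_add[OF a b] ev_add[OF b a] T0 T0 T0]) (simp add: algebra_simps)
  show "ca_mul G a b = ca_mul G b a"
    by (rule eq5[OF mul_in[OF a b] mul_in[OF b a] ev_mul[OF a b] ev_mul[OF b a] T0 T0 T0]) (simp add: algebra_simps)
next
  fix a assume a: "a \<in> CR"
  show "ca_add G a (ca_zero G) = a"
    by (rule eq5[OF add_in[OF a zero_in] a ev_add[OF a zero_in] ev_zero T0 T0 T0]) simp
  show "ca_add G a (ca_scale G (-1) a) = ca_zero G"
    by (rule eq5[OF add_in[OF a scale_in[OF a]] zero_in ev_add[OF a scale_in[OF a, of "-1"]] ev_scale[OF a, of "-1"] ev_zero T0 T0]) simp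
  show "ca_mul G (ca_one G) a = a"
    by (rule eq5[OF mul_in[OF one_in a] a ev_mul[OF one_in a] ev_one T0 T0 T0]) simp
next
  fix c d :: complex and a assume a: "a \<in> CR"
  show "ca_scale G c (ca_scale G d a) = ca_scale G (c * d) a"
    by (rule eq5[OF scale_in[OF scale_in[OF a]] scale_in[OF a] ev_scale[OF scale_in[OF a, of d], of c] ev_scale[OF a, of d] ev_scale[OF a, of "c*d"] T0 T0]) simp
  show "ca_scale G (c + d) a = ca_add G (ca_scale G c a) (ca_scale G d a)"
    by (rule eq5[OF scale_in[OF a] add_in[OF scale_in[OF a] scale_in[OF a]] ev_scale[OF a, of "c+d"] ev_add[OF scale_in[OF a, of c] scale_in[OF a, of d]] ev_scale[OF a, of c] ev_scale[OF a, of d] T0]) (simp add: algebra_simps)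
  show "ca_scale G 1 a = a"
    by (rule eq5[OF scale_in[OF a] a ev_scale[OF a, of 1] T0 T0 T0 T0]) simp
next
  fix c :: complex and a b assume a: "a \<in> CR" and b: "b \<in> CR"
  show "ca_scale G c a \<in> CR" using scale_in[OF a] .
  show "ca_scale G c (ca_add G a b) = ca_add G (ca_scale G c a) (ca_scale G c b)"
    by (rule eq5[OF scale_in[OF add_in[OF a b]] add_in[OF scale_in[OF a] scale_in[OF b]] ev_scale[OF add_in[OF a b], of c] ev_add[OF a b] ev_add[OF scale_in[OF a, of c] scale_in[OF b, of c]] ev_scale[OF a, of c] ev_scale[OF b, of c]]) (simp add: algebra_simps)
  show "ca_scale G c (ca_mul G a b) = ca_mul G (ca_scale G c a) b"
    by (rule eq5[OF scale_in[OF mul_in[OF a b]] mul_in[OF scale_in[OF a] b] ev_scale[OF mul_in[OF a b], of c] ev_mul[OF a b] ev_mul[OF scale_in[OF a, of c] b] ev_scale[OF a, of c] T0]) (simp add: algebra_simps)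
qed

end

context gctx begin

lemma rep_contV:
  assumes a: "a \<in> CR"
  obtains V where "openin X V" "K \<subseteq> V" "V \<subseteq> U" "smooth_fun X Atl V (rep a)"
    "continuous_map (subtopology X V) euclidean (rep a)"
proof -
  obtain V where V: "openin X V" "K \<subseteq> V" "V \<subseteq> U" "smooth_fun X Atl V (rep a)"
    using rep_smK[OF a] unfolding smK_def by blast
  then show ?thesis using that smooth_fun_continuous[OF man chart V(4) V(3)] by blast
qed

lemma rep_contK: "a \<in> CR \<Longrightarrow> continuous_map (subtopology X K) euclidean (rep a)"
proof -
  assume a: "a \<in> CR"
  obtain V where V: "K \<subseteq> V" "continuous_map (subtopology X V) euclidean (rep a)"
    using rep_contV[OF a] by metis
  have "continuous_map (subtopology (subtopology X V) K) euclidean (rep a)"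
    by (rule continuous_map_from_subtopology[OF V(2)])
  then show ?thesis using V(1) by (simp add: subtopology_subtopology Int_absorb1)
qed

lemma compact_img_K:
  assumes "continuous_map (subtopology X K) euclidean (h :: 'a \<Rightarrow> 'b::metric_space)"
  shows "compact (h ` K)"
proof -
  have "compactin (subtopology X K) K" using Kc by (simp add: compactin_subtopology)
  from image_compactin[OF this assms] show ?thesis by simp
qed

lemma bdd_rep: "a \<in> CR \<Longrightarrow> bdd_above ((\<lambda>x. cmod (rep a x)) ` K)"
proof -
  assume a: "a \<in> CR"
  have "bounded (rep a ` K)" using compact_img_K[OF rep_contK[OF a]] compact_imp_bounded by blast
  then have "bounded ((\<lambda>x. cmod (rep a x)) ` K)" by (simp add: bounded_norm_comp)
  then show ?thesis by (rule bounded_imp_bdd_above)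
qed

definition qK :: "('a \<Rightarrow> complex) set \<Rightarrow> real" where
  "qK a = Sup (insert 0 ((\<lambda>x. cmod (rep a x)) ` K))"

lemma qK_upper: "a \<in> CR \<Longrightarrow> x \<in> K \<Longrightarrow> cmod (rep a x) \<le> qK a"
  unfolding qK_def by (rule cSup_upper) (auto intro: bdd_rep)

lemma qK_nonneg: "a \<in> CR \<Longrightarrow> 0 \<le> qK a"
  unfolding qK_def by (rule cSup_upper) (auto intro: bdd_rep)

lemma qK_least: "(\<And>x. x \<in> K \<Longrightarrow> cmod (rep a x) \<le> r) \<Longrightarrow> 0 \<le> r \<Longrightarrow> qK a \<le> r"
  unfolding qK_def by (rule cSup_least) auto

lemma qK_submult: "submult_seminorm G qK"
  unfolding submult_seminorm_def Let_def
proof (intro conjI ballI allI)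
  fix a assume a: "a \<in> CR"
  show "0 \<le> qK a" by (rule qK_nonneg[OF a])
  fix c :: complex
  show "qK (ca_scale G c a) = cmod c * qK a"
  proof (rule antisym)
    show "qK (ca_scale G c a) \<le> cmod c * qK a"
    proof (rule qK_least)
      fix x assume x: "x \<in> K"
      have "rep (ca_scale G c a) x = c * rep a x" using ev_K[OF ev_scale[OF a] x] .
      then show "cmod (rep (ca_scale G c a) x) \<le> cmod c * qK a"
        using qK_upper[OF a x] by (simp add: norm_mult mult_left_mono)
    qed (simp add: qK_nonneg[OF a])
    show "cmod c * qK a \<le> qK (ca_scale G c a)"
    proof (cases "c = 0")
      case True then show ?thesis using qK_nonneg[OF scale_in[OF a]] by simp
    next
      case False
      have "qK a \<le> qK (ca_scale G c a) / cmod c"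
      proof (rule qK_least)
        fix x assume x: "x \<in> K"
        have "rep (ca_scale G c a) x = c * rep a x" using ev_K[OF ev_scale[OF a] x] .
        then have "cmod (rep a x) = cmod (rep (ca_scale G c a) x) / cmod c" using False by (simp add: norm_mult)
        then show "cmod (rep a x) \<le> qK (ca_scale G c a) / cmod c"
          using qK_upper[OF scale_in[OF a] x] False by (simp add: divide_right_mono)
      qed (simp add: qK_nonneg[OF scale_in[OF a]])
      then show ?thesis using False by (simp add: field_simps)
    qed
  qed
next
  fix a b assume a: "a \<in> CR" and b: "b \<in> CR"
  show "qK (ca_add G a b) \<le> qK a + qK b"
  proof (rule qK_least)
    fix x assume x: "x \<in> K"
    have "rep (ca_add G a b) x = rep a x + rep b x" using ev_K[OF ev_add[OF a b] x] .
    then show "cmod (rep (ca_add G a b) x) \<le> qK a + qK b"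
      using qK_upper[OF a x] qK_upper[OF b x] norm_triangle_ineq[of "rep a x" "rep b x"] by simp
  qed (simp add: qK_nonneg a b add_nonneg_nonneg)
  show "qK (ca_mul G a b) \<le> qK a * qK b"
  proof (rule qK_least)
    fix x assume x: "x \<in> K"
    have "rep (ca_mul G a b) x = rep a x * rep b x" using ev_K[OF ev_mul[OF a b] x] .
    then show "cmod (rep (ca_mul G a b) x) \<le> qK a * qK b"
      using qK_upper[OF a x] qK_upper[OF b x] by (simp add: norm_mult mult_mono qK_nonneg a b)
  qed (simp add: qK_nonneg a b)
qed

definition Nset where
  "Nset m C f = {cmod (iter_pd vs (f \<circ> inv_into U \<phi>) (\<phi> x)) | vs x. set vs \<subseteq> Basis \<and> length vs \<le> m \<and> x \<in> C}"

lemma Nsn_Nset: "Nsn U \<phi> m C f = Sup (insert 0 (Nset m C f))"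
  unfolding Nsn_def Nset_def by simp

lemma Nset_bdd:
  assumes f: "smooth_fun X Atl V f" and VU: "V \<subseteq> U" and C: "compactin X C" "C \<subseteq> V"
  shows "bdd_above (Nset m C f)"
proof -
  let ?L = "{vs. set vs \<subseteq> (Basis::'n set) \<and> length vs \<le> m}"
  have fin: "finite ?L" by (rule finite_lists_length_le) simp
  have cp: "compact (\<phi> ` C)"
  proof -
    have "compactin (subtopology X U) C" using C VU by (simp add: compactin_subtopology)
    from image_compactin[OF this chart_cont[OF ischart]] show ?thesis by simp
  qed
  have sm: "smooth_on (\<phi> ` V) (f \<circ> inv_into U \<phi>)"
    using f chart VU unfolding smooth_fun_def by (auto simp: Int_absorb2)
  have bd: "bounded ((\<lambda>y. cmod (iter_pd vs (f \<circ> inv_into U \<phi>) y)) ` (\<phi> ` C))" if "vs \<in> ?L" for vs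
  proof -
    from sm have "\<forall>vs. set vs \<subseteq> Basis \<longrightarrow> iter_pd vs (f \<circ> inv_into U \<phi>) differentiable_on (\<phi> ` V)"
      by (simp add: smooth_on_def)
    moreover have "set vs \<subseteq> Basis" using that by simp
    ultimately have "iter_pd vs (f \<circ> inv_into U \<phi>) differentiable_on (\<phi> ` V)" by simp
    then have "continuous_on (\<phi> ` V) (iter_pd vs (f \<circ> inv_into U \<phi>))"
      by (rule differentiable_imp_continuous_on)
    then have "continuous_on (\<phi> ` C) (iter_pd vs (f \<circ> inv_into U \<phi>))"
      by (rule continuous_on_subset) (rule image_mono[OF C(2)])
    then have "compact (iter_pd vs (f \<circ> inv_into U \<phi>) ` (\<phi> ` C))" by (rule compact_continuous_image[OF _ cp])
    then have "bounded (iter_pd vs (f \<circ> inv_into U \<phi>) ` (\<phi> ` C))" by (rule compact_imp_bounded)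
    then show ?thesis by (simp only: bounded_norm_comp)
  qed
  have "bounded (\<Union>vs\<in>?L. (\<lambda>y. cmod (iter_pd vs (f \<circ> inv_into U \<phi>) y)) ` (\<phi> ` C))"
    by (rule bounded_UN[OF fin]) (use bd in simp)
  moreover have "Nset m C f = (\<Union>vs\<in>?L. (\<lambda>y. cmod (iter_pd vs (f \<circ> inv_into U \<phi>) y)) ` (\<phi> ` C))"
  proof (rule set_eqI)
    fix r
    show "r \<in> Nset m C f \<longleftrightarrow> r \<in> (\<Union>vs\<in>?L. (\<lambda>y. cmod (iter_pd vs (f \<circ> inv_into U \<phi>) y)) ` (\<phi> ` C))"
    proof
      assume "r \<in> Nset m C f"
      then obtain vs x where "r = cmod (iter_pd vs (f \<circ> inv_into U \<phi>) (\<phi> x))" "set vs \<subseteq> Basis" "length vs \<le> m" "x \<in> C"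
        unfolding Nset_def by blast
      then show "r \<in> (\<Union>vs\<in>?L. (\<lambda>y. cmod (iter_pd vs (f \<circ> inv_into U \<phi>) y)) ` (\<phi> ` C))" by auto
    next
      assume "r \<in> (\<Union>vs\<in>?L. (\<lambda>y. cmod (iter_pd vs (f \<circ> inv_into U \<phi>) y)) ` (\<phi> ` C))"
      then obtain vs x where "r = cmod (iter_pd vs (f \<circ> inv_into U \<phi>) (\<phi> x))" "set vs \<subseteq> Basis" "length vs \<le> m" "x \<in> C"
        by auto
      then show "r \<in> Nset m C f" unfolding Nset_def by blast
    qed
  qed
  ultimately show ?thesis using bounded_imp_bdd_above by simp
qed

lemma Nsn_mono:
  assumes f: "smooth_fun X Atl V f" and VU: "V \<subseteq> U" and C: "compactin X C'" "C' \<subseteq> V"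
    and "m \<le> m'" "C \<subseteq> C'"
  shows "Nsn U \<phi> m C f \<le> Nsn U \<phi> m' C' f"
  unfolding Nsn_Nset
proof (rule cSup_subset_mono)
  show "insert 0 (Nset m C f) \<noteq> {}" by simp
  show "bdd_above (insert 0 (Nset m' C' f))" using Nset_bdd[OF f VU C] by simp
  show "insert 0 (Nset m C f) \<subseteq> insert 0 (Nset m' C' f)"
  proof
    fix r assume "r \<in> insert 0 (Nset m C f)"
    then consider "r = 0" | vs x where "r = cmod (iter_pd vs (f \<circ> inv_into U \<phi>) (\<phi> x))" "set vs \<subseteq> Basis" "length vs \<le> m" "x \<in> C"
      unfolding Nset_def by blast
    then show "r \<in> insert 0 (Nset m' C' f)"
    proof cases
      case 1 then show ?thesis by simp
    next
      case 2 then have "r \<in> Nset m' C' f" unfolding Nset_def using assms(5,6) by fastforce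
      then show ?thesis by simp
    qed
  qed
qed

lemma Nsn_nonneg:
  assumes f: "smooth_fun X Atl V f" and VU: "V \<subseteq> U" and C: "compactin X C" "C \<subseteq> V"
  shows "0 \<le> Nsn U \<phi> m C f"
  unfolding Nsn_Nset by (rule cSup_upper) (use Nset_bdd[OF f VU C] in auto)

lemma Nsn_upper0:
  assumes f: "smooth_fun X Atl V f" and VU: "V \<subseteq> U" and C: "compactin X C" "C \<subseteq> V" and x: "x \<in> C"
  shows "cmod (f x) \<le> Nsn U \<phi> m C f"
  unfolding Nsn_Nset
proof (rule cSup_upper)
  show "bdd_above (insert 0 (Nset m C f))" using Nset_bdd[OF f VU C] by simp
  have "x \<in> U" using x C VU by auto
  then have eq: "cmod (f x) = cmod (iter_pd [] (f \<circ> inv_into U \<phi>) (\<phi> x))"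
    using chart_inv[OF ischart] by simp
  have "\<exists>vs y. cmod (f x) = cmod (iter_pd vs (f \<circ> inv_into U \<phi>) (\<phi> y)) \<and> set vs \<subseteq> Basis \<and> length vs \<le> m \<and> y \<in> C"
    using eq x by (intro exI[of _ "[]"] exI[of _ x]) simp
  then show "cmod (f x) \<in> insert 0 (Nset m C f)" unfolding Nset_def by simp
qed

abbreviation PP where "PP \<equiv> {q. submult_seminorm G q \<and>
         (\<forall>V. openin X V \<and> K \<subseteq> V \<and> V \<subseteq> U \<longrightarrow>
            (\<exists>m C c. compactin X C \<and> C \<subseteq> V \<and>
               (\<forall>f. smooth_fun X Atl V f \<longrightarrow> q (gm f) \<le> c * Nsn U \<phi> m C f)))}"

lemma qK_PP: "qK \<in> PP"
proof (intro CollectI conjI allI impI)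
  show "submult_seminorm G qK" by (rule qK_submult)
  fix V assume V: "openin X V \<and> K \<subseteq> V \<and> V \<subseteq> U"
  show "\<exists>m C c. compactin X C \<and> C \<subseteq> V \<and> (\<forall>f. smooth_fun X Atl V f \<longrightarrow> qK (gm f) \<le> c * Nsn U \<phi> m C f)"
  proof (intro exI conjI allI impI)
    show "compactin X K" by (rule Kc)
    show "K \<subseteq> V" using V by blast
    fix f assume f: "smooth_fun X Atl V f"
    have sf: "smK f" unfolding smK_def using V f by blast
    show "qK (gm f) \<le> 1 * Nsn U \<phi> 0 K f"
    proof (simp, rule qK_least)
      fix x assume x: "x \<in> K"
      have "rep (gm f) x = f x" using ev_K[OF rep_ev[OF sf] x] .
      then show "cmod (rep (gm f) x) \<le> Nsn U \<phi> 0 K f"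
        using Nsn_upper0[OF f _ Kc _ x] V by simp
    qed (use Nsn_nonneg[OF f _ Kc] V in simp)
  qed
qed

lemma PP_max: "p \<in> PP \<Longrightarrow> q \<in> PP \<Longrightarrow> (\<lambda>a. max (p a) (q a)) \<in> PP"
proof -
  assume p: "p \<in> PP" and q: "q \<in> PP"
  have sp: "submult_seminorm G p" and sq: "submult_seminorm G q" using p q by auto
  have pp: "\<forall>V. openin X V \<and> K \<subseteq> V \<and> V \<subseteq> U \<longrightarrow> (\<exists>m C c. compactin X C \<and> C \<subseteq> V \<and>
               (\<forall>f. smooth_fun X Atl V f \<longrightarrow> p (gm f) \<le> c * Nsn U \<phi> m C f))" using p by simp
  have qq: "\<forall>V. openin X V \<and> K \<subseteq> V \<and> V \<subseteq> U \<longrightarrow> (\<exists>m C c. compactin X C \<and> C \<subseteq> V \<and>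
               (\<forall>f. smooth_fun X Atl V f \<longrightarrow> q (gm f) \<le> c * Nsn U \<phi> m C f))" using q by simp
  show ?thesis
  proof (intro CollectI conjI allI impI)
    show "submult_seminorm G (\<lambda>a. max (p a) (q a))"
      using sp sq unfolding submult_seminorm_def Let_def
      apply (intro conjI ballI allI)
          apply (simp add: le_max_iff_disj)
         apply (smt (verit, best))
        apply (simp add: max_mult_distrib_left)
      apply (smt (verit, best) mult_mono)
      done
    fix V assume V: "openin X V \<and> K \<subseteq> V \<and> V \<subseteq> U"
    obtain m1 C1 c1 where 1: "compactin X C1" "C1 \<subseteq> V" "\<forall>f. smooth_fun X Atl V f \<longrightarrow> p (gm f) \<le> c1 * Nsn U \<phi> m1 C1 f"
      using pp[rule_format, OF V] by blast
    obtain m2 C2 c2 where 2: "compactin X C2" "C2 \<subseteq> V" "\<forall>f. smooth_fun X Atl V f \<longrightarrow> q (gm f) \<le> c2 * Nsn U \<phi> m2 C2 f"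
      using qq[rule_format, OF V] by blast
    show "\<exists>m C c. compactin X C \<and> C \<subseteq> V \<and> (\<forall>f. smooth_fun X Atl V f \<longrightarrow> max (p (gm f)) (q (gm f)) \<le> c * Nsn U \<phi> m C f)"
    proof (intro exI conjI allI impI)
      show cC: "compactin X (C1 \<union> C2)" using 1 2 compactin_Un by blast
      show sC: "C1 \<union> C2 \<subseteq> V" using 1 2 by blast
      fix f assume f: "smooth_fun X Atl V f"
      have VU: "V \<subseteq> U" using V by blast
      have n1: "0 \<le> Nsn U \<phi> m1 C1 f" "Nsn U \<phi> m1 C1 f \<le> Nsn U \<phi> (max m1 m2) (C1 \<union> C2) f"
        using Nsn_nonneg[OF f VU 1(1,2)] Nsn_mono[OF f VU cC sC] by auto
      have n2: "0 \<le> Nsn U \<phi> m2 C2 f" "Nsn U \<phi> m2 C2 f \<le> Nsn U \<phi> (max m1 m2) (C1 \<union> C2) f"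
        using Nsn_nonneg[OF f VU 2(1,2)] Nsn_mono[OF f VU cC sC] by auto
      have a1: "p (gm f) \<le> max (max c1 c2) 0 * Nsn U \<phi> (max m1 m2) (C1 \<union> C2) f"
      proof -
        have "p (gm f) \<le> c1 * Nsn U \<phi> m1 C1 f" using 1(3) f by blast
        also have "\<dots> \<le> max (max c1 c2) 0 * Nsn U \<phi> m1 C1 f" using n1 by (simp add: mult_right_mono)
        also have "\<dots> \<le> max (max c1 c2) 0 * Nsn U \<phi> (max m1 m2) (C1 \<union> C2) f" using n1 by (simp add: mult_left_mono)
        finally show ?thesis .
      qed
      have a2: "q (gm f) \<le> max (max c1 c2) 0 * Nsn U \<phi> (max m1 m2) (C1 \<union> C2) f"
      proof -
        have "q (gm f) \<le> c2 * Nsn U \<phi> m2 C2 f" using 2(3) f by blast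
        also have "\<dots> \<le> max (max c1 c2) 0 * Nsn U \<phi> m2 C2 f" using n2 by (simp add: mult_right_mono)
        also have "\<dots> \<le> max (max c1 c2) 0 * Nsn U \<phi> (max m1 m2) (C1 \<union> C2) f" using n2 by (simp add: mult_left_mono)
        finally show ?thesis .
      qed
      show "max (p (gm f)) (q (gm f)) \<le> max (max c1 c2) 0 * Nsn U \<phi> (max m1 m2) (C1 \<union> C2) f"
        using a1 a2 by simp
    qed
  qed
qed

end

context gctx begin

abbreviation "T \<equiv> germ_top X Atl U \<phi> K"

definition PPd where "PPd = PP"

lemma qK_PPd: "qK \<in> PPd" unfolding PPd_def by (rule qK_PP)
lemma PPd_max: "p \<in> PPd \<Longrightarrow> q \<in> PPd \<Longrightarrow> (\<lambda>a. max (p a) (q a)) \<in> PPd" unfolding PPd_def by (rule PP_max)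

definition bl where "bl p a e = {b \<in> CR. p (ca_sub G b a) < e}"

definition SB where "SB = {bl p a e | p a e. p \<in> PPd \<and> a \<in> CR \<and> e > 0}"

lemma T_eq: "T = topology_generated_by SB"
  unfolding germ_top_def seminorm_topology_def bl_def SB_def PPd_def by simp

lemma SB_I: "p \<in> PPd \<Longrightarrow> a \<in> CR \<Longrightarrow> e > 0 \<Longrightarrow> bl p a e \<in> SB"
  unfolding SB_def by blast
lemma SB_E: "s \<in> SB \<Longrightarrow> (\<And>p a e. s = bl p a e \<Longrightarrow> p \<in> PPd \<Longrightarrow> a \<in> CR \<Longrightarrow> e > 0 \<Longrightarrow> P) \<Longrightarrow> P"
  unfolding SB_def by blast

lemma PPd_sm: "p \<in> PPd \<Longrightarrow> submult_seminorm G p" unfolding PPd_def by simp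

lemma sm_nn: "submult_seminorm G p \<Longrightarrow> a \<in> CR \<Longrightarrow> 0 \<le> p a"
  unfolding submult_seminorm_def Let_def by blast
lemma sm_add: "submult_seminorm G p \<Longrightarrow> a \<in> CR \<Longrightarrow> b \<in> CR \<Longrightarrow> p (ca_add G a b) \<le> p a + p b"
  unfolding submult_seminorm_def Let_def by blast
lemma sm_scale: "submult_seminorm G p \<Longrightarrow> a \<in> CR \<Longrightarrow> p (ca_scale G c a) = cmod c * p a"
  unfolding submult_seminorm_def Let_def by blast
lemma sm_mul: "submult_seminorm G p \<Longrightarrow> a \<in> CR \<Longrightarrow> b \<in> CR \<Longrightarrow> p (ca_mul G a b) \<le> p a * p b"
  unfolding submult_seminorm_def Let_def by blast
lemma p_nn: "p \<in> PPd \<Longrightarrow> a \<in> CR \<Longrightarrow> 0 \<le> p a" by (rule sm_nn[OF PPd_sm])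
lemma p_add: "p \<in> PPd \<Longrightarrow> a \<in> CR \<Longrightarrow> b \<in> CR \<Longrightarrow> p (ca_add G a b) \<le> p a + p b" by (rule sm_add[OF PPd_sm])
lemma p_scale: "p \<in> PPd \<Longrightarrow> a \<in> CR \<Longrightarrow> p (ca_scale G c a) = cmod c * p a" by (rule sm_scale[OF PPd_sm])
lemma p_mul: "p \<in> PPd \<Longrightarrow> a \<in> CR \<Longrightarrow> b \<in> CR \<Longrightarrow> p (ca_mul G a b) \<le> p a * p b" by (rule sm_mul[OF PPd_sm])

lemma sub_self: "a \<in> CR \<Longrightarrow> ca_sub G a a = ca_zero G"
proof -
  assume a: "a \<in> CR"
  show ?thesis by (rule eq5[OF sub_in[OF a a] zero_in ev_sub[OF a a] ev_zero T0 T0 T0]) simp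
qed

lemma p_sub_self: "p \<in> PPd \<Longrightarrow> a \<in> CR \<Longrightarrow> p (ca_sub G a a) = 0"
proof -
  assume p: "p \<in> PPd" and a: "a \<in> CR"
  have "p (ca_sub G a a) = p (ca_scale G 0 (ca_one G))" using sub_self[OF a] unfolding ca_zero_def by simp
  also have "\<dots> = 0" using p_scale[OF p one_in, of 0] by simp
  finally show ?thesis .
qed

lemma in_bl: "p \<in> PPd \<Longrightarrow> a \<in> CR \<Longrightarrow> e > 0 \<Longrightarrow> a \<in> bl p a e"
proof -
  assume p: "p \<in> PPd" and a: "a \<in> CR" and e: "e > 0"
  show ?thesis unfolding bl_def using p_sub_self[OF p a] a e by simp
qed

lemma topT: "topspace T = CR"
proof -
  have "topspace T = \<Union>SB"
    unfolding T_eq by simp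
  also have "\<dots> = CR"
  proof
    show "\<Union>SB \<subseteq> CR" by (auto elim!: SB_E simp: bl_def)
    show "CR \<subseteq> \<Union>SB"
    proof
      fix a assume a: "a \<in> CR"
      have "a \<in> bl qK a 1" using in_bl[OF qK_PPd a] by simp
      moreover have "bl qK a 1 \<in> SB" using SB_I[OF qK_PPd a] by simp
      ultimately show "a \<in> \<Union>SB" by blast
    qed
  qed
  finally show ?thesis .
qed

lemma bl_open: "p \<in> PPd \<Longrightarrow> a \<in> CR \<Longrightarrow> e > 0 \<Longrightarrow> openin T (bl p a e)"
proof -
  assume "p \<in> PPd" "a \<in> CR" "e > 0"
  then have "bl p a e \<in> SB" by (rule SB_I)
  then show ?thesis unfolding T_eq openin_topology_generated_by_iff by (rule generate_topology_on.Basis)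
qed

lemma cont_T:
  assumes im: "\<And>y. y \<in> topspace Y \<Longrightarrow> f y \<in> CR"
    and op: "\<And>p a e. p \<in> PPd \<Longrightarrow> a \<in> CR \<Longrightarrow> e > 0 \<Longrightarrow> openin Y {y \<in> topspace Y. f y \<in> bl p a e}"
  shows "continuous_map Y T f"
  unfolding continuous_map_def
proof (intro conjI allI impI)
  show "f \<in> topspace Y \<rightarrow> topspace T" using im topT by auto
  fix W assume "openin T W"
  then have "generate_topology_on SB W"
    unfolding T_eq openin_topology_generated_by_iff .
  then show "openin Y {x \<in> topspace Y. f x \<in> W}"
  proof (induction rule: generate_topology_on.induct)
    case Empty then show ?case by simp
  next
    case (Int a b)
    have "{x \<in> topspace Y. f x \<in> a \<inter> b} = {x \<in> topspace Y. f x \<in> a} \<inter> {x \<in> topspace Y. f x \<in> b}" by blast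
    then show ?case using Int.IH by (simp add: openin_Int)
  next
    case (UN KK)
    have "{x \<in> topspace Y. f x \<in> \<Union>KK} = \<Union>((\<lambda>k. {x \<in> topspace Y. f x \<in> k}) ` KK)" by blast
    then show ?case using UN.IH by (metis (mono_tags, lifting) imageE openin_Union)
  next
    case (Basis s)
    then show ?case by (rule SB_E) (use op in simp)
  qed
qed

end

context gctx begin

lemma I1:
  assumes x: "x \<in> CR" and y: "y \<in> CR" and a: "a \<in> CR" and b: "b \<in> CR" and a0: "a0 \<in> CR"
  shows "ca_sub G (ca_add G x y) a0 = ca_add G (ca_sub G x a) (ca_add G (ca_sub G y b) (ca_sub G (ca_add G a b) a0))"
proof (rule eq_ev)
  show "ca_sub G (ca_add G x y) a0 \<in> CR" by (rule sub_in[OF add_in[OF x y] a0])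
  show "ca_add G (ca_sub G x a) (ca_add G (ca_sub G y b) (ca_sub G (ca_add G a b) a0)) \<in> CR"
    by (rule add_in[OF sub_in[OF x a] add_in[OF sub_in[OF y b] sub_in[OF add_in[OF a b] a0]]])
  show "eventually (\<lambda>z. rep (ca_sub G (ca_add G x y) a0) z = rep (ca_add G (ca_sub G x a) (ca_add G (ca_sub G y b) (ca_sub G (ca_add G a b) a0))) z) FK"
    using ev_sub[OF add_in[OF x y] a0] ev_add[OF x y]
      ev_add[OF sub_in[OF x a] add_in[OF sub_in[OF y b] sub_in[OF add_in[OF a b] a0]]]
      ev_sub[OF x a] ev_add[OF sub_in[OF y b] sub_in[OF add_in[OF a b] a0]] ev_sub[OF y b]
      ev_sub[OF add_in[OF a b] a0] ev_add[OF a b]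
    by eventually_elim simp
qed

lemma I2:
  assumes x: "x \<in> CR" and a: "a \<in> CR" and b0: "b0 \<in> CR"
  shows "ca_sub G (ca_scale G c x) b0 = ca_add G (ca_scale G c (ca_sub G x a)) (ca_add G (ca_scale G (c - c0) a) (ca_sub G (ca_scale G c0 a) b0))"
proof (rule eq_ev)
  show "ca_sub G (ca_scale G c x) b0 \<in> CR" by (rule sub_in[OF scale_in[OF x] b0])
  show "ca_add G (ca_scale G c (ca_sub G x a)) (ca_add G (ca_scale G (c - c0) a) (ca_sub G (ca_scale G c0 a) b0)) \<in> CR"
    by (rule add_in[OF scale_in[OF sub_in[OF x a]] add_in[OF scale_in[OF a] sub_in[OF scale_in[OF a] b0]]])
  show "eventually (\<lambda>z. rep (ca_sub G (ca_scale G c x) b0) z = rep (ca_add G (ca_scale G c (ca_sub G x a)) (ca_add G (ca_scale G (c - c0) a) (ca_sub G (ca_scale G c0 a) b0))) z) FK"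
    using ev_sub[OF scale_in[OF x, of c] b0] ev_scale[OF x, of c]
      ev_add[OF scale_in[OF sub_in[OF x a]] add_in[OF scale_in[OF a] sub_in[OF scale_in[OF a] b0]], of c "c - c0" c0]
      ev_scale[OF sub_in[OF x a], of c] ev_sub[OF x a]
      ev_add[OF scale_in[OF a] sub_in[OF scale_in[OF a] b0], of "c - c0" c0] ev_scale[OF a, of "c - c0"]
      ev_sub[OF scale_in[OF a] b0, of c0] ev_scale[OF a, of c0]
    by eventually_elim (simp only:, simp add: algebra_simps)
qed

lemma I3:
  assumes a: "a \<in> CR" and x: "x \<in> CR" and y: "y \<in> CR" and b0: "b0 \<in> CR"
  shows "ca_sub G (ca_mul G a x) b0 = ca_add G (ca_mul G a (ca_sub G x y)) (ca_sub G (ca_mul G a y) b0)"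
proof (rule eq_ev)
  show "ca_sub G (ca_mul G a x) b0 \<in> CR" by (rule sub_in[OF mul_in[OF a x] b0])
  show "ca_add G (ca_mul G a (ca_sub G x y)) (ca_sub G (ca_mul G a y) b0) \<in> CR"
    by (rule add_in[OF mul_in[OF a sub_in[OF x y]] sub_in[OF mul_in[OF a y] b0]])
  show "eventually (\<lambda>z. rep (ca_sub G (ca_mul G a x) b0) z = rep (ca_add G (ca_mul G a (ca_sub G x y)) (ca_sub G (ca_mul G a y) b0)) z) FK"
    using ev_sub[OF mul_in[OF a x] b0] ev_mul[OF a x]
      ev_add[OF mul_in[OF a sub_in[OF x y]] sub_in[OF mul_in[OF a y] b0]]
      ev_mul[OF a sub_in[OF x y]] ev_sub[OF x y] ev_sub[OF mul_in[OF a y] b0] ev_mul[OF a y]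
    by eventually_elim (simp only:, simp add: algebra_simps)
qed

end

context gctx begin

lemma bl_mem: "b \<in> bl p a e \<longleftrightarrow> b \<in> CR \<and> p (ca_sub G b a) < e"
  unfolding bl_def by simp

lemma cont_add: "continuous_map (prod_topology T T) T (\<lambda>(a,b). ca_add G a b)"
proof (rule cont_T)
  fix z assume "z \<in> topspace (prod_topology T T)"
  then show "(\<lambda>(a,b). ca_add G a b) z \<in> CR" using topT add_in by (auto split: prod.splits)
next
  fix p a0 and e :: real assume p: "p \<in> PPd" and a0: "a0 \<in> CR" and e: "e > 0"
  let ?W = "{z \<in> topspace (prod_topology T T). (\<lambda>(a,b). ca_add G a b) z \<in> bl p a0 e}"
  show "openin (prod_topology T T) ?W"
  proof (subst openin_subopen, intro ballI)
    fix z assume z: "z \<in> ?W"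
    obtain a b where zab: "z = (a,b)" by force
    have a: "a \<in> CR" and b: "b \<in> CR" using z zab topT by auto
    have lt: "p (ca_sub G (ca_add G a b) a0) < e" using z zab by (simp add: bl_mem)
    define d where "d = e - p (ca_sub G (ca_add G a b) a0)"
    have d: "d > 0" using lt d_def by simp
    show "\<exists>Nb. openin (prod_topology T T) Nb \<and> z \<in> Nb \<and> Nb \<subseteq> ?W"
    proof (intro exI conjI)
      show "openin (prod_topology T T) (bl p a (d/2) \<times> bl p b (d/2))"
        using bl_open[OF p a, of "d/2"] bl_open[OF p b, of "d/2"] d by (simp add: openin_prod_Times_iff)
      show "z \<in> bl p a (d/2) \<times> bl p b (d/2)" using in_bl[OF p a, of "d/2"] in_bl[OF p b, of "d/2"] d zab by simp
      show "bl p a (d/2) \<times> bl p b (d/2) \<subseteq> ?W"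
      proof
        fix w assume w: "w \<in> bl p a (d/2) \<times> bl p b (d/2)"
        obtain x y where wxy: "w = (x,y)" by force
        have x: "x \<in> CR" and px: "p (ca_sub G x a) < d/2" using w wxy by (auto simp: bl_mem)
        have y: "y \<in> CR" and py: "p (ca_sub G y b) < d/2" using w wxy by (auto simp: bl_mem)
        have "p (ca_sub G (ca_add G x y) a0) \<le> p (ca_sub G x a) + (p (ca_sub G y b) + p (ca_sub G (ca_add G a b) a0))"
        proof -
          have "p (ca_sub G (ca_add G x y) a0) \<le> p (ca_sub G x a) + p (ca_add G (ca_sub G y b) (ca_sub G (ca_add G a b) a0))"
            unfolding I1[OF x y a b a0] by (rule p_add[OF p sub_in[OF x a] add_in[OF sub_in[OF y b] sub_in[OF add_in[OF a b] a0]]])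
          also have "\<dots> \<le> p (ca_sub G x a) + (p (ca_sub G y b) + p (ca_sub G (ca_add G a b) a0))"
            using p_add[OF p sub_in[OF y b] sub_in[OF add_in[OF a b] a0]] by simp
          finally show ?thesis .
        qed
        then have "p (ca_sub G (ca_add G x y) a0) < e" using px py d_def by simp
        then show "w \<in> ?W" using wxy x y topT add_in[OF x y] by (simp add: bl_mem)
      qed
    qed
  qed
qed

lemma cont_scale: "continuous_map (prod_topology euclidean T) T (\<lambda>(c,a). ca_scale G c a)"
proof (rule cont_T)
  fix z :: "complex \<times> _" assume "z \<in> topspace (prod_topology euclidean T)"
  then show "(\<lambda>(c,a). ca_scale G c a) z \<in> CR" using topT scale_in by (auto split: prod.splits)
next
  fix p b0 and e :: real assume p: "p \<in> PPd" and b0: "b0 \<in> CR" and e: "e > 0"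
  let ?W = "{z \<in> topspace (prod_topology euclidean T). (\<lambda>(c,a). ca_scale G c a) z \<in> bl p b0 e}"
  show "openin (prod_topology euclidean T) ?W"
  proof (subst openin_subopen, intro ballI)
    fix z :: "complex \<times> _" assume z: "z \<in> ?W"
    obtain c0 a where zab: "z = (c0,a)" by force
    have a: "a \<in> CR" using z zab topT by auto
    have lt: "p (ca_sub G (ca_scale G c0 a) b0) < e" using z zab by (simp add: bl_mem)
    define d where "d = e - p (ca_sub G (ca_scale G c0 a) b0)"
    have d: "d > 0" using lt d_def by simp
    define M where "M = cmod c0 + 1 + p a"
    have M: "M > 0" using p_nn[OF p a] norm_ge_zero[of c0] M_def by linarith
    define h where "h = min 1 (d / (2 * M))"
    have h: "h > 0" "h \<le> 1" "h * M \<le> d / 2" using d M unfolding h_def by (auto simp: field_simps min_def)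
    show "\<exists>Nb. openin (prod_topology euclidean T) Nb \<and> z \<in> Nb \<and> Nb \<subseteq> ?W"
    proof (intro exI conjI)
      show "openin (prod_topology euclidean T) (ball c0 h \<times> bl p a h)"
        using bl_open[OF p a h(1)] by (simp add: openin_prod_Times_iff)
      show "z \<in> ball c0 h \<times> bl p a h" using in_bl[OF p a h(1)] h zab by simp
      show "ball c0 h \<times> bl p a h \<subseteq> ?W"
      proof
        fix w assume w: "w \<in> ball c0 h \<times> bl p a h"
        obtain c x where wxy: "w = (c,x)" by force
        have x: "x \<in> CR" and px: "p (ca_sub G x a) < h" using w wxy by (auto simp: bl_mem)
        have dc: "cmod (c - c0) < h" using w wxy by (simp add: dist_norm norm_minus_commute)
        have cc: "cmod c \<le> cmod c0 + 1"
          using norm_triangle_ineq2[of c c0] dc h(2) by simp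
        have "p (ca_sub G (ca_scale G c x) b0) \<le> p (ca_scale G c (ca_sub G x a)) + (p (ca_scale G (c - c0) a) + p (ca_sub G (ca_scale G c0 a) b0))"
        proof -
          have "p (ca_sub G (ca_scale G c x) b0) \<le> p (ca_scale G c (ca_sub G x a)) + p (ca_add G (ca_scale G (c - c0) a) (ca_sub G (ca_scale G c0 a) b0))"
            unfolding I2[OF x a b0, of c c0] by (rule p_add[OF p scale_in[OF sub_in[OF x a]] add_in[OF scale_in[OF a] sub_in[OF scale_in[OF a] b0]]])
          also have "\<dots> \<le> p (ca_scale G c (ca_sub G x a)) + (p (ca_scale G (c - c0) a) + p (ca_sub G (ca_scale G c0 a) b0))"
            using p_add[OF p scale_in[OF a] sub_in[OF scale_in[OF a] b0]] by simp
          finally show ?thesis .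
        qed
        also have "\<dots> = cmod c * p (ca_sub G x a) + (cmod (c - c0) * p a + p (ca_sub G (ca_scale G c0 a) b0))"
          using p_scale[OF p sub_in[OF x a]] p_scale[OF p a] by simp
        finally have ineq: "p (ca_sub G (ca_scale G c x) b0) \<le> cmod c * p (ca_sub G x a) + (cmod (c - c0) * p a + p (ca_sub G (ca_scale G c0 a) b0))" .
        have t1: "cmod c * p (ca_sub G x a) \<le> (cmod c0 + 1) * h"
          by (rule mult_mono) (use cc px p_nn[OF p sub_in[OF x a]] in auto)
        have t2: "cmod (c - c0) * p a \<le> h * p a"
          by (rule mult_right_mono) (use dc p_nn[OF p a] in auto)
        have "(cmod c0 + 1) * h + h * p a = h * M" unfolding M_def by (simp add: algebra_simps)
        then have "p (ca_sub G (ca_scale G c x) b0) < e" using ineq t1 t2 h(3) d d_def by linarith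
        then show "w \<in> ?W" using wxy x topT scale_in[OF x] by (simp add: bl_mem)
      qed
    qed
  qed
qed

lemma cont_mulL: assumes a: "a \<in> CR" shows "continuous_map T T (ca_mul G a)"
proof (rule cont_T)
  fix z assume "z \<in> topspace T"
  then show "ca_mul G a z \<in> CR" using topT mul_in[OF a] by auto
next
  fix p b0 and e :: real assume p: "p \<in> PPd" and b0: "b0 \<in> CR" and e: "e > 0"
  let ?W = "{z \<in> topspace T. ca_mul G a z \<in> bl p b0 e}"
  show "openin T ?W"
  proof (subst openin_subopen, intro ballI)
    fix b1 assume z: "b1 \<in> ?W"
    have b1: "b1 \<in> CR" using z topT by auto
    have lt: "p (ca_sub G (ca_mul G a b1) b0) < e" using z by (simp add: bl_mem)
    define d where "d = e - p (ca_sub G (ca_mul G a b1) b0)"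
    have d: "d > 0" using lt d_def by simp
    define h where "h = d / (2 * (p a + 1))"
    have pa: "0 \<le> p a" using p_nn[OF p a] .
    have h: "h > 0" "(p a + 1) * h = d / 2" using d pa unfolding h_def by (auto simp: field_simps)
    show "\<exists>Nb. openin T Nb \<and> b1 \<in> Nb \<and> Nb \<subseteq> ?W"
    proof (intro exI conjI)
      show "openin T (bl p b1 h)" by (rule bl_open[OF p b1 h(1)])
      show "b1 \<in> bl p b1 h" by (rule in_bl[OF p b1 h(1)])
      show "bl p b1 h \<subseteq> ?W"
      proof
        fix x assume w: "x \<in> bl p b1 h"
        have x: "x \<in> CR" and px: "p (ca_sub G x b1) < h" using w by (auto simp: bl_mem)
        have "p (ca_sub G (ca_mul G a x) b0) \<le> p (ca_mul G a (ca_sub G x b1)) + p (ca_sub G (ca_mul G a b1) b0)"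
          unfolding I3[OF a x b1 b0] by (rule p_add[OF p mul_in[OF a sub_in[OF x b1]] sub_in[OF mul_in[OF a b1] b0]])
        also have "\<dots> \<le> p a * p (ca_sub G x b1) + p (ca_sub G (ca_mul G a b1) b0)"
          using p_mul[OF p a sub_in[OF x b1]] by simp
        finally have ineq: "p (ca_sub G (ca_mul G a x) b0) \<le> p a * p (ca_sub G x b1) + p (ca_sub G (ca_mul G a b1) b0)" .
        have "p a * p (ca_sub G x b1) \<le> (p a + 1) * h"
          by (rule mult_mono) (use px pa p_nn[OF p sub_in[OF x b1]] in auto)
        then have "p (ca_sub G (ca_mul G a x) b0) < e" using ineq h d d_def by linarith
        then show "x \<in> ?W" using x topT mul_in[OF a x] by (simp add: bl_mem)
      qed
    qed
  qed
qed

lemma mul_comm: "a \<in> CR \<Longrightarrow> b \<in> CR \<Longrightarrow> ca_mul G a b = ca_mul G b a"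
proof -
  assume a: "a \<in> CR" and b: "b \<in> CR"
  show ?thesis by (rule eq5[OF mul_in[OF a b] mul_in[OF b a] ev_mul[OF a b] ev_mul[OF b a] T0 T0 T0]) (simp add: algebra_simps)
qed

lemma cont_mulR: assumes a: "a \<in> CR" shows "continuous_map T T (\<lambda>b. ca_mul G b a)"
  by (rule continuous_map_eq[OF cont_mulL[OF a]]) (use mul_comm[OF a] topT in auto)

lemma top_alg: "topological_calgebra G T"
  unfolding topological_calgebra_def
  using comm_alg topT cont_add cont_scale cont_mulL cont_mulR by blast

lemma lmc: "lmc_algebra G T"
  unfolding lmc_algebra_def
proof (intro conjI exI[of _ PPd])
  show "topological_calgebra G T" by (rule top_alg)
  show "PPd \<noteq> {}" using qK_PPd by blast
  show "\<forall>p\<in>PPd. submult_seminorm G p" using PPd_sm by blast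
  show "\<forall>p\<in>PPd. \<forall>q\<in>PPd. \<exists>r\<in>PPd. \<forall>a\<in>CR. p a \<le> r a \<and> q a \<le> r a"
  proof (intro ballI)
    fix p q assume pq: "p \<in> PPd" "q \<in> PPd"
    show "\<exists>r\<in>PPd. \<forall>a\<in>CR. p a \<le> r a \<and> q a \<le> r a"
      by (rule bexI[OF _ PPd_max[OF pq]]) simp
  qed
  show "T = seminorm_topology G PPd" unfolding germ_top_def PPd_def by simp
qed

end

context gctx begin

lemma nz_nbhd:
  assumes a: "a \<in> CR" and nz: "\<forall>x\<in>K. rep a x \<noteq> 0"
  obtains V where "openin X V" "K \<subseteq> V" "V \<subseteq> U" "smooth_fun X Atl V (rep a)" "\<forall>x\<in>V. rep a x \<noteq> 0"
proof -
  obtain V where V: "openin X V" "K \<subseteq> V" "V \<subseteq> U" "smooth_fun X Atl V (rep a)"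
    "continuous_map (subtopology X V) euclidean (rep a)"
    using rep_contV[OF a] by metis
  have VX: "V \<subseteq> topspace X" using V(1) openin_subset by blast
  define V' where "V' = {x \<in> topspace (subtopology X V). rep a x \<in> - {0}}"
  have "openin (subtopology X V) V'" unfolding V'_def
    by (rule openin_continuous_map_preimage[OF V(5)]) (simp add: open_Compl)
  then have o: "openin X V'" using openin_trans_full V(1) by blast
  have V'eq: "V' = {x \<in> V. rep a x \<noteq> 0}" unfolding V'_def using VX by (auto simp: topspace_subtopology)
  have "smooth_fun X Atl V' (rep a)" by (rule smooth_fun_subset[OF V(4) o]) (auto simp: V'eq)
  moreover have "K \<subseteq> V'" using V(2) nz V'eq by auto
  moreover have "V' \<subseteq> U" using V(3) V'eq by auto
  ultimately show ?thesis using that o V'eq by blast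
qed

lemma inv_exists:
  assumes a: "a \<in> CR" and nz: "\<forall>x\<in>K. rep a x \<noteq> 0"
  shows "\<exists>b\<in>CR. ca_mul G a b = ca_one G \<and> ca_mul G b a = ca_one G"
proof -
  obtain V where V: "openin X V" "K \<subseteq> V" "V \<subseteq> U" "smooth_fun X Atl V (rep a)" "\<forall>x\<in>V. rep a x \<noteq> 0"
    using nz_nbhd[OF a nz] by metis
  define f where "f = (\<lambda>x. inverse (rep a x))"
  have "smooth_fun X Atl V f" unfolding f_def by (rule smooth_fun_inverse[OF man V(4) V(5)])
  then have sf: "smK f" unfolding smK_def using V by blast
  define b where "b = gm f"
  have b: "b \<in> CR" unfolding b_def by (rule gm_in[OF sf])
  have evnz: "eventually (\<lambda>x. rep a x \<noteq> 0) FK" unfolding eventually_FK using V by blast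
  have ab: "ca_mul G a b = ca_one G"
  proof (rule eq_ev[OF mul_in[OF a b] one_in])
    show "eventually (\<lambda>x. rep (ca_mul G a b) x = rep (ca_one G) x) FK"
      using ev_mul[OF a b] ev_one rep_ev[OF sf] evnz unfolding b_def f_def
      by eventually_elim simp
  qed
  moreover have "ca_mul G b a = ca_one G" using ab mul_comm[OF a b] by simp
  ultimately show ?thesis using b by blast
qed

lemma inv_rep:
  assumes a: "a \<in> CR" and b: "b \<in> CR" and ab: "ca_mul G a b = ca_one G" and x: "x \<in> K"
  shows "rep a x * rep b x = 1"
proof -
  have "rep (ca_mul G a b) x = rep a x * rep b x" using ev_K[OF ev_mul[OF a b] x] .
  moreover have "rep (ca_one G) x = 1" using ev_K[OF ev_one x] .
  ultimately show ?thesis using ab by simp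
qed

lemma Qalg: "Q_algebra G T"
  unfolding Q_algebra_def
proof (subst openin_subopen, intro ballI)
  fix a assume ai: "a \<in> invertibles G"
  then obtain b where a: "a \<in> CR" and b: "b \<in> CR" and ab: "ca_mul G a b = ca_one G" "ca_mul G b a = ca_one G"
    unfolding invertibles_def by blast
  define h where "h = 1 / (qK b + 1)"
  have qb: "0 \<le> qK b" using qK_nonneg[OF b] .
  have h: "h > 0" unfolding h_def using qb by simp
  show "\<exists>Nb. openin T Nb \<and> a \<in> Nb \<and> Nb \<subseteq> invertibles G"
  proof (intro exI conjI)
    show "openin T (bl qK a h)" by (rule bl_open[OF qK_PPd a h])
    show "a \<in> bl qK a h" by (rule in_bl[OF qK_PPd a h])
    show "bl qK a h \<subseteq> invertibles G"
    proof
      fix y assume y: "y \<in> bl qK a h"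
      have yC: "y \<in> CR" and qy: "qK (ca_sub G y a) < h" using y by (auto simp: bl_mem)
      have "rep y x \<noteq> 0" if x: "x \<in> K" for x
      proof -
        have 1: "rep a x * rep b x = 1" by (rule inv_rep[OF a b ab(1) x])
        have nb: "cmod (rep b x) \<le> qK b" by (rule qK_upper[OF b x])
        have nb0: "cmod (rep b x) > 0" using 1 by auto
        have "cmod (rep a x) * cmod (rep b x) = 1" using 1 by (metis norm_mult norm_one)
        then have "cmod (rep a x) = 1 / cmod (rep b x)" using nb0 by (simp add: field_simps)
        moreover have "1 / cmod (rep b x) > h" unfolding h_def using nb nb0 qb
          by (simp add: frac_less2)
        ultimately have ra: "cmod (rep a x) > h" by simp
        have "rep (ca_sub G y a) x = rep y x - rep a x" using ev_K[OF ev_sub[OF yC a] x] .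
        then have "cmod (rep y x - rep a x) < h" using qK_upper[OF sub_in[OF yC a] x] qy by simp
        then have "cmod (rep y x) > 0" using ra norm_triangle_ineq2[of "rep a x" "rep y x"]
          norm_minus_commute[of "rep a x" "rep y x"] by linarith
        then show ?thesis by auto
      qed
      then obtain c where "c \<in> CR" "ca_mul G y c = ca_one G \<and> ca_mul G c y = ca_one G"
        using inv_exists[OF yC] by blast
      then show "y \<in> invertibles G" unfolding invertibles_def using yC by blast
    qed
  qed
qed

lemma pe_eq: "a \<in> CR \<Longrightarrow> point_eval X Atl U K x a = rep a x"
  unfolding point_eval_def by simp

lemma ev_char: assumes x: "x \<in> K" shows "point_eval X Atl U K x \<in> characters G T"
  unfolding characters_def
proof (intro CollectI conjI ballI allI)
  show "point_eval X Atl U K x \<in> extensional CR" unfolding point_eval_def by simp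
  show "\<exists>a\<in>CR. point_eval X Atl U K x a \<noteq> 0"
    using one_in pe_eq[OF one_in, of x] ev_K[OF ev_one x] by (intro bexI[of _ "ca_one G"]) auto
  show "continuous_map T euclidean (point_eval X Atl U K x)"
    unfolding continuous_map_def
  proof (intro conjI allI impI)
    show "point_eval X Atl U K x \<in> topspace T \<rightarrow> topspace euclidean" by simp
    fix O' :: "complex set" assume "openin euclidean O'"
    then have oO: "open O'" by simp
    show "openin T {a \<in> topspace T. point_eval X Atl U K x a \<in> O'}"
    proof (subst openin_subopen, intro ballI)
      fix a assume "a \<in> {a \<in> topspace T. point_eval X Atl U K x a \<in> O'}"
      then have a: "a \<in> CR" and aO: "rep a x \<in> O'" using topT pe_eq by auto
      obtain r where r: "r > 0" "ball (rep a x) r \<subseteq> O'" using oO aO open_contains_ball by blast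
      show "\<exists>Nb. openin T Nb \<and> a \<in> Nb \<and> Nb \<subseteq> {a \<in> topspace T. point_eval X Atl U K x a \<in> O'}"
      proof (intro exI conjI)
        show "openin T (bl qK a r)" by (rule bl_open[OF qK_PPd a r(1)])
        show "a \<in> bl qK a r" by (rule in_bl[OF qK_PPd a r(1)])
        show "bl qK a r \<subseteq> {a \<in> topspace T. point_eval X Atl U K x a \<in> O'}"
        proof
          fix y assume y: "y \<in> bl qK a r"
          have yC: "y \<in> CR" and qy: "qK (ca_sub G y a) < r" using y by (auto simp: bl_mem)
          have "rep (ca_sub G y a) x = rep y x - rep a x" using ev_K[OF ev_sub[OF yC a] x] .
          then have "cmod (rep y x - rep a x) < r" using qK_upper[OF sub_in[OF yC a] x] qy by simp
          then have "rep y x \<in> ball (rep a x) r" by (simp add: dist_norm norm_minus_commute)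
          then show "y \<in> {a \<in> topspace T. point_eval X Atl U K x a \<in> O'}"
            using r(2) yC topT pe_eq[OF yC] by auto
        qed
      qed
    qed
  qed
next
  fix a b assume a: "a \<in> CR" and b: "b \<in> CR"
  show "point_eval X Atl U K x (ca_add G a b) = point_eval X Atl U K x a + point_eval X Atl U K x b"
    using pe_eq[OF add_in[OF a b]] pe_eq[OF a] pe_eq[OF b] ev_K[OF ev_add[OF a b] x] by simp
  show "point_eval X Atl U K x (ca_mul G a b) = point_eval X Atl U K x a * point_eval X Atl U K x b"
    using pe_eq[OF mul_in[OF a b]] pe_eq[OF a] pe_eq[OF b] ev_K[OF ev_mul[OF a b] x] by simp
next
  fix c a assume a: "a \<in> CR"
  show "point_eval X Atl U K x (ca_scale G c a) = c * point_eval X Atl U K x a"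
    using pe_eq[OF scale_in[OF a]] pe_eq[OF a] ev_K[OF ev_scale[OF a] x] by simp
qed

end

context gctx begin

lemma mul_one: "a \<in> CR \<Longrightarrow> ca_mul G (ca_one G) a = a"
proof -
  assume a: "a \<in> CR"
  show ?thesis by (rule eq5[OF mul_in[OF one_in a] a ev_mul[OF one_in a] ev_one T0 T0 T0]) simp
qed

lemma char_props:
  assumes ch: "ch \<in> characters G T"
  shows "\<And>a b. a \<in> CR \<Longrightarrow> b \<in> CR \<Longrightarrow> ch (ca_add G a b) = ch a + ch b"
    and "\<And>a b. a \<in> CR \<Longrightarrow> b \<in> CR \<Longrightarrow> ch (ca_mul G a b) = ch a * ch b"
    and "\<And>c a. a \<in> CR \<Longrightarrow> ch (ca_scale G c a) = c * ch a"
    and "\<exists>a\<in>CR. ch a \<noteq> 0"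
  using ch unfolding characters_def by blast+

lemma char_one: assumes ch: "ch \<in> characters G T" shows "ch (ca_one G) = 1"
proof -
  obtain a where a: "a \<in> CR" "ch a \<noteq> 0" using char_props(4)[OF ch] by blast
  have "ch a = ch (ca_one G) * ch a" using char_props(2)[OF ch one_in a(1)] mul_one[OF a(1)] by simp
  then show ?thesis using a(2) by simp
qed

lemma char_zero: assumes ch: "ch \<in> characters G T" shows "ch (ca_zero G) = 0"
  unfolding ca_zero_def using char_props(3)[OF ch one_in, of 0] by simp

definition cj where "cj b = gm (\<lambda>z. cnj (rep b z))"

lemma cj_in: "b \<in> CR \<Longrightarrow> cj b \<in> CR"
  unfolding cj_def by (intro gm_in smK_cnj rep_smK)

lemma ev_cj: "b \<in> CR \<Longrightarrow> eventually (\<lambda>z. rep (cj b) z = cnj (rep b z)) FK"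
  unfolding cj_def by (intro rep_ev smK_cnj rep_smK)

lemma mult_cnj_sq: "w * cnj w = (complex_of_real (cmod w))\<^sup>2"
  by (metis complex_norm_square of_real_power)

definition Onz where "Onz b = \<Union>{V. openin X V \<and> (\<forall>w\<in>V. rep b w \<noteq> 0)}"

lemma Onz_open: "openin X (Onz b)"
  unfolding Onz_def by (rule openin_Union) blast

lemma Onz_nz: "z \<in> Onz b \<Longrightarrow> rep b z \<noteq> 0"
  unfolding Onz_def by blast

lemma Onz_mem:
  assumes b: "b \<in> CR" and x: "x \<in> K" and nz: "rep b x \<noteq> 0"
  shows "x \<in> Onz b"
proof -
  obtain V where V: "openin X V" "K \<subseteq> V" "V \<subseteq> U" "smooth_fun X Atl V (rep b)"
    "continuous_map (subtopology X V) euclidean (rep b)"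
    using rep_contV[OF b] by metis
  have VX: "V \<subseteq> topspace X" using V(1) openin_subset by blast
  define V' where "V' = {z \<in> topspace (subtopology X V). rep b z \<in> - {0}}"
  have "openin (subtopology X V) V'" unfolding V'_def
    by (rule openin_continuous_map_preimage[OF V(5)]) (simp add: open_Compl)
  then have o: "openin X V'" using openin_trans_full V(1) by blast
  have V'eq: "V' = {z \<in> V. rep b z \<noteq> 0}" unfolding V'_def using VX by (auto simp: topspace_subtopology)
  have "x \<in> V'" using V'eq x V(2) nz by auto
  moreover have "V' \<in> {V. openin X V \<and> (\<forall>w\<in>V. rep b w \<noteq> 0)}" using o V'eq by auto
  ultimately show ?thesis unfolding Onz_def by blast
qed

lemma char_point:
  assumes ch: "ch \<in> characters G T"
  shows "\<exists>x\<in>K. \<forall>a\<in>CR. ch a = rep a x"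
proof (rule ccontr)
  assume H: "\<not> (\<exists>x\<in>K. \<forall>a\<in>CR. ch a = rep a x)"
  define Z where "Z = {b \<in> CR. ch b = 0}"
  have cover: "\<exists>b\<in>Z. x \<in> Onz b" if x: "x \<in> K" for x
  proof -
    obtain a where a: "a \<in> CR" "ch a \<noteq> rep a x" using H x by blast
    define b where "b = ca_sub G a (ca_scale G (ch a) (ca_one G))"
    have bC: "b \<in> CR" unfolding b_def by (intro sub_in scale_in one_in a(1))
    have "ch b = ch a + (-1) * (ch a * 1)"
      unfolding b_def ca_sub_def
      using char_props(1)[OF ch a(1) scale_in[OF scale_in[OF one_in]]]
        char_props(3)[OF ch scale_in[OF one_in]] char_props(3)[OF ch one_in] char_one[OF ch] by simp
    then have chb: "ch b = 0" by simp
    have "rep b x = rep a x - ch a * 1"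
      using ev_K[OF ev_sub[OF a(1) scale_in[OF one_in]] x] ev_K[OF ev_scale[OF one_in] x] ev_K[OF ev_one x]
      unfolding b_def by simp
    then have "rep b x \<noteq> 0" using a(2) by simp
    then have "x \<in> Onz b" by (rule Onz_mem[OF bC x])
    then show ?thesis using bC chb Z_def by blast
  qed
  have "K \<subseteq> \<Union>(Onz ` Z)" using cover by blast
  moreover have "\<forall>W\<in>Onz ` Z. openin X W" using Onz_open by blast
  ultimately obtain FF where FF: "finite FF" "FF \<subseteq> Onz ` Z" "K \<subseteq> \<Union>FF"
    using Kc unfolding compactin_def by meson
  obtain F where F: "F \<subseteq> Z" "finite F" "FF = Onz ` F" using finite_subset_image[OF FF(1,2)] by blast
  have claim: "\<exists>s\<in>CR. ch s = 0 \<and> (\<forall>z\<in>K. Im (rep s z) = 0 \<and> 0 \<le> Re (rep s z)) \<and>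
      (\<forall>z\<in>K \<inter> \<Union>(Onz ` F). 0 < Re (rep s z))"
    using F(2,1)
  proof (induction F rule: finite_induct)
    case empty
    show ?case
    proof (intro bexI[of _ "ca_zero G"] conjI ballI)
      show "ch (ca_zero G) = 0" by (rule char_zero[OF ch])
      fix z assume z: "z \<in> K"
      show "Im (rep (ca_zero G) z) = 0" "0 \<le> Re (rep (ca_zero G) z)" using ev_K[OF ev_zero z] by simp_all
    qed (auto intro: zero_in)
  next
    case (insert b F)
    obtain s where s: "s \<in> CR" "ch s = 0" "\<forall>z\<in>K. Im (rep s z) = 0 \<and> 0 \<le> Re (rep s z)"
      "\<forall>z\<in>K \<inter> \<Union>(Onz ` F). 0 < Re (rep s z)" using insert.IH insert.prems by blast
    have b: "b \<in> CR" "ch b = 0" using insert.prems Z_def by auto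
    define s' where "s' = ca_add G s (ca_mul G b (cj b))"
    have s'C: "s' \<in> CR" unfolding s'_def by (intro add_in mul_in cj_in s(1) b(1))
    have "ch s' = ch s + ch b * ch (cj b)"
      unfolding s'_def using char_props(1)[OF ch s(1) mul_in[OF b(1) cj_in[OF b(1)]]]
        char_props(2)[OF ch b(1) cj_in[OF b(1)]] by simp
    then have chs': "ch s' = 0" using s(2) b(2) by simp
    have rs': "rep s' z = rep s z + of_real ((cmod (rep b z))\<^sup>2)" if z: "z \<in> K" for z
      using ev_K[OF ev_add[OF s(1) mul_in[OF b(1) cj_in[OF b(1)]]] z]
        ev_K[OF ev_mul[OF b(1) cj_in[OF b(1)]] z] ev_K[OF ev_cj[OF b(1)] z]
      unfolding s'_def by (simp add: mult_cnj_sq)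
    show ?case
    proof (intro bexI[OF _ s'C] conjI ballI)
      show "ch s' = 0" by (rule chs')
      fix z assume z: "z \<in> K"
      show "Im (rep s' z) = 0" "0 \<le> Re (rep s' z)" using rs'[OF z] s(3) z by auto
    next
      fix z assume z: "z \<in> K \<inter> \<Union>(Onz ` insert b F)"
      then have zK: "z \<in> K" by blast
      show "0 < Re (rep s' z)"
      proof (cases "z \<in> Onz b")
        case True
        then have "rep b z \<noteq> 0" by (rule Onz_nz)
        then have p: "0 < (cmod (rep b z))\<^sup>2" by simp
        have "Re (rep s' z) = Re (rep s z) + (cmod (rep b z))\<^sup>2" using rs'[OF zK] by simp
        moreover have "0 \<le> Re (rep s z)" using s(3) zK by blast
        ultimately show ?thesis using p by linarith
      next
        case False
        then have "0 < Re (rep s z)" using z s(4) by auto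
        moreover have "0 \<le> (cmod (rep b z))\<^sup>2" by simp
        moreover have "Re (rep s' z) = Re (rep s z) + (cmod (rep b z))\<^sup>2" using rs'[OF zK] by simp
        ultimately show ?thesis by linarith
      qed
    qed
  qed
  then obtain s where s: "s \<in> CR" "ch s = 0" "\<forall>z\<in>K \<inter> \<Union>(Onz ` F). 0 < Re (rep s z)" by blast
  have "\<forall>z\<in>K. rep s z \<noteq> 0"
  proof
    fix z assume z: "z \<in> K"
    then have "z \<in> \<Union>(Onz ` F)" using FF(3) F(3) by blast
    then have "0 < Re (rep s z)" using s(3) z by blast
    then show "rep s z \<noteq> 0" by auto
  qed
  then obtain t where t: "t \<in> CR" "ca_mul G s t = ca_one G" using inv_exists[OF s(1)] by blast
  have "ch (ca_one G) = ch s * ch t" using char_props(2)[OF ch s(1) t(1)] t(2) by simp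
  then show False using char_one[OF ch] s(2) by simp
qed

end

context gctx begin

lemma topK: "topspace (subtopology X K) = K"
  using KX by (simp add: Int_absorb1)

lemma chars_ext: "characters G T \<subseteq> topspace (product_topology (\<lambda>_. euclidean) CR)"
  unfolding characters_def by (auto simp: PiE_def)

lemma top_spec: "topspace (spectrum_top G T) = characters G T"
  unfolding spectrum_top_def using chars_ext by auto

lemma pe_inj: "inj_on (point_eval X Atl U K) K"
proof
  fix x y assume x: "x \<in> K" and y: "y \<in> K" and eq: "point_eval X Atl U K x = point_eval X Atl U K y"
  show "x = y"
  proof (rule ccontr)
    assume "x \<noteq> y"
    then have "\<phi> x \<noteq> \<phi> y" using chart_inj[OF ischart] x y KU by (meson inj_on_def subsetD)
    then obtain b :: 'n where b: "b \<in> Basis" "\<phi> x \<bullet> b \<noteq> \<phi> y \<bullet> b" using euclidean_eqI by blast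
    define f where "f = (\<lambda>z. complex_of_real (\<phi> z \<bullet> b))"
    have "smooth_fun X Atl U f" unfolding f_def by (rule smooth_fun_coord[OF man chart])
    then have sf: "smK f" unfolding smK_def using Uopen KU by blast
    have a: "gm f \<in> CR" by (rule gm_in[OF sf])
    have "point_eval X Atl U K x (gm f) = f x" using pe_eq[OF a] ev_K[OF rep_ev[OF sf] x] by simp
    moreover have "point_eval X Atl U K y (gm f) = f y" using pe_eq[OF a] ev_K[OF rep_ev[OF sf] y] by simp
    ultimately have "f x = f y" using eq by simp
    then show False using b(2) unfolding f_def by simp
  qed
qed

lemma pe_cont: "continuous_map (subtopology X K) (spectrum_top G T) (point_eval X Atl U K)"
  unfolding spectrum_top_def
proof (rule continuous_map_into_subtopology)
  show "point_eval X Atl U K \<in> topspace (subtopology X K) \<rightarrow> characters G T"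
    using ev_char topK by auto
  show "continuous_map (subtopology X K) (product_topology (\<lambda>_. euclidean) CR) (point_eval X Atl U K)"
    unfolding continuous_map_componentwise
  proof (intro conjI ballI)
    show "point_eval X Atl U K ` topspace (subtopology X K) \<subseteq> extensional CR"
      unfolding point_eval_def by auto
    fix a assume a: "a \<in> CR"
    show "continuous_map (subtopology X K) euclidean (\<lambda>x. point_eval X Atl U K x a)"
      by (rule continuous_map_eq[OF rep_contK[OF a]]) (simp add: pe_eq[OF a])
  qed
qed

lemma pe_onto: "point_eval X Atl U K ` K = characters G T"
proof
  show "point_eval X Atl U K ` K \<subseteq> characters G T" using ev_char by auto
  show "characters G T \<subseteq> point_eval X Atl U K ` K"
  proof
    fix ch assume ch: "ch \<in> characters G T"
    obtain x where x: "x \<in> K" "\<forall>a\<in>CR. ch a = rep a x" using char_point[OF ch] by blast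
    have "ch = point_eval X Atl U K x"
    proof (rule extensionalityI[of _ CR])
      show "ch \<in> extensional CR" using ch unfolding characters_def by blast
      show "point_eval X Atl U K x \<in> extensional CR" unfolding point_eval_def by simp
      fix a assume "a \<in> CR" then show "ch a = point_eval X Atl U K x a" using x pe_eq by simp
    qed
    then show "ch \<in> point_eval X Atl U K ` K" using x(1) by blast
  qed
qed

lemma homeo: "homeomorphic_map (subtopology X K) (spectrum_top G T) (point_eval X Atl U K)"
proof (rule bijective_closed_imp_homeomorphic_map)
  show "continuous_map (subtopology X K) (spectrum_top G T) (point_eval X Atl U K)" by (rule pe_cont)
  have H: "Hausdorff_space (spectrum_top G T)"
    unfolding spectrum_top_def
    by (rule Hausdorff_space_subtopology) (simp add: Hausdorff_space_product_topology)
  show "closed_map (subtopology X K) (spectrum_top G T) (point_eval X Atl U K)"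
    by (rule continuous_imp_closed_map[OF pe_cont compact_space_subtopology[OF Kc] H])
  show "point_eval X Atl U K ` topspace (subtopology X K) = topspace (spectrum_top G T)"
    using pe_onto topK top_spec by simp
  show "inj_on (point_eval X Atl U K) (topspace (subtopology X K))" using pe_inj topK by simp
qed

end

theorem proposition4p1:
  fixes X :: "'a topology" and Atl :: "('a set \<times> ('a \<Rightarrow> 'n::euclidean_space)) set"
    and U K :: "'a set" and \<phi> :: "'a \<Rightarrow> 'n"
  assumes "smooth_manifold X Atl"
    and "(U, \<phi>) \<in> Atl"
    and "compactin X K" and "K \<subseteq> U"
  shows "lmc_algebra (germ_alg X Atl U K) (germ_top X Atl U \<phi> K) \<and>
         Q_algebra (germ_alg X Atl U K) (germ_top X Atl U \<phi> K) \<and>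
         homeomorphic_map (subtopology X K)
           (spectrum_top (germ_alg X Atl U K) (germ_top X Atl U \<phi> K))
           (point_eval X Atl U K)"
proof -
  interpret gctx X Atl U K \<phi> using assms by unfold_locales
  show ?thesis using lmc Qalg homeo by blast
qed


end
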